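(* Let $\Gamma$ be a weighted digraph with vertex set $\{1,\dots,n\}$, $n>1$, without loops and with strictly positive arc weights, with Laplacian matrix $L$, in-forest dimension $d$, and let $\tilde J=J_{n-d}=\sigma_{n-d}^{-1}Q_{n-d}$. Then: (i) $L\tilde J=\tilde JL=LQ_{n-d}=Q_{n-d}L=0$; (ii) $\tilde JJ_k=J_k\tilde J=\tilde J$ for $k=0,\dots,n-d$; (iii) $\tilde J^2=\tilde J$; (iv) $\operatorname{rank}\tilde J=\mu_1(\tilde J)=\operatorname{tr}\tilde J=d$ and $\mu_0(\tilde J)=n-d$.
   Context: $W=(w_{ij})$ is the matrix of arc weights ($w_{ij}>0$ iff there is an arc $i\to j$, else $0$). The Laplacian $L=(\ell_{ij})$: $\ell_{ij}=-w_{ij}$ for $j\ne i$, $\ell_{ii}=\sum_{k\ne i}w_{ik}$. The weight of a subgraph is the product of its arc weights (1 if no arcs); the weight of a set of subgraphs is the sum of their weights. A converging tree is a weakly connected digraph with one vertex (the root) of outdegree 0 and all others of outdegree 1; an in-forest is a spanning subgraph of $\Gamma$ whose weak components are converging trees. The in-forest dimension $d$ is the minimal number of trees in an in-forest (so in-forests have at most $n-d$ arcs). $\sigma_k$ is the total weight of in-forests with $k$ arcs; $Q_k=(q^k_{ij})$ with $q^k_{ij}$ the total weight of in-forests with $k$ arcs in which $i$ lies in a tree rooted at $j$; $J_k=\sigma_k^{-1}Q_k$ for $k=0,\dots,n-d$. $\mu_\lambda(A)$ denotes the multiplicity of $\lambda$ as an eigenvalue of the square matrix $A$. *)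

theory Defs
  imports "Jordan_Normal_Form.DL_Rank" "Jordan_Normal_Form.Char_Poly"
begin

text \<open>Weighted digraphs on the vertex set {0..<n} given by an n x n weight matrix W
  (arc i->j iff W(i,j) > 0).\<close>

definition arcs :: "nat \<Rightarrow> real mat \<Rightarrow> (nat \<times> nat) set" where
  "arcs n W = {(i,j). i < n \<and> j < n \<and> W $$ (i,j) > 0}"

definition outdeg :: "(nat \<times> nat) set \<Rightarrow> nat \<Rightarrow> nat" where
  "outdeg A v = card {w. (v,w) \<in> A}"

definition weakly_connected :: "nat set \<Rightarrow> (nat \<times> nat) set \<Rightarrow> bool" where
  "weakly_connected V A \<longleftrightarrow> (\<forall>x\<in>V. \<forall>y\<in>V. (x,y) \<in> (A \<union> A\<inverse>)\<^sup>*)"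

definition converging_tree :: "nat set \<Rightarrow> (nat \<times> nat) set \<Rightarrow> bool" where
  "converging_tree V A \<longleftrightarrow> finite V \<and> A \<subseteq> V \<times> V \<and> weakly_connected V A \<and>
     (\<exists>r\<in>V. outdeg A r = 0 \<and> (\<forall>v\<in>V - {r}. outdeg A v = 1))"

definition weak_comp :: "nat set \<Rightarrow> (nat \<times> nat) set \<Rightarrow> nat \<Rightarrow> nat set" where
  "weak_comp V F v = {u\<in>V. (v,u) \<in> (F \<union> F\<inverse>)\<^sup>*}"

definition weak_comps :: "nat set \<Rightarrow> (nat \<times> nat) set \<Rightarrow> nat set set" where
  "weak_comps V F = weak_comp V F ` V"

definition in_forest :: "nat \<Rightarrow> real mat \<Rightarrow> (nat \<times> nat) set \<Rightarrow> bool" where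
  "in_forest n W F \<longleftrightarrow> F \<subseteq> arcs n W \<and>
     (\<forall>C\<in>weak_comps {..<n} F. converging_tree C (F \<inter> (C \<times> C)))"

definition forest_dim :: "nat \<Rightarrow> real mat \<Rightarrow> nat" where
  "forest_dim n W = Min {card (weak_comps {..<n} F) | F. in_forest n W F}"

definition weight :: "real mat \<Rightarrow> (nat \<times> nat) set \<Rightarrow> real" where
  "weight W F = (\<Prod>(i,j)\<in>F. W $$ (i,j))"

definition sigma :: "nat \<Rightarrow> real mat \<Rightarrow> nat \<Rightarrow> real" where
  "sigma n W k = (\<Sum>F\<in>{F. in_forest n W F \<and> card F = k}. weight W F)"

definition rooted_at :: "nat \<Rightarrow> (nat \<times> nat) set \<Rightarrow> nat \<Rightarrow> nat \<Rightarrow> bool" where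
  "rooted_at n F i j \<longleftrightarrow> j \<in> weak_comp {..<n} F i \<and> outdeg (F \<inter> (weak_comp {..<n} F i \<times> weak_comp {..<n} F i)) j = 0"

definition Qmat :: "nat \<Rightarrow> real mat \<Rightarrow> nat \<Rightarrow> real mat" where
  "Qmat n W k = mat n n (\<lambda>(i,j).
     (\<Sum>F\<in>{F. in_forest n W F \<and> card F = k \<and> rooted_at n F i j}. weight W F))"

definition Jmat :: "nat \<Rightarrow> real mat \<Rightarrow> nat \<Rightarrow> real mat" where
  "Jmat n W k = (1 / sigma n W k) \<cdot>\<^sub>m Qmat n W k"

definition laplacian :: "nat \<Rightarrow> real mat \<Rightarrow> real mat" where
  "laplacian n W = mat n n (\<lambda>(i,j). if i = j then (\<Sum>k\<in>{..<n} - {i}. W $$ (i,k)) else - W $$ (i,j))"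

definition eig_mult :: "real \<Rightarrow> real mat \<Rightarrow> nat" where
  "eig_mult lam A = order lam (char_poly A)"

definition mat_trace :: "real mat \<Rightarrow> real" where
  "mat_trace A = (\<Sum>i<dim_row A. A $$ (i,i))"

end

theory Submission
  imports Defs "Jordan_Normal_Form.Jordan_Normal_Form_Uniqueness" "Jordan_Normal_Form.Jordan_Normal_Form_Existence"
begin

definition rootof :: "(nat \<times> nat) set \<Rightarrow> nat \<Rightarrow> nat" where
  "rootof F x = (THE r. (x,r) \<in> F\<^sup>* \<and> r \<notin> Domain F)"

definition forest :: "nat \<Rightarrow> real mat \<Rightarrow> (nat \<times> nat) set \<Rightarrow> bool" where
  "forest n W F \<longleftrightarrow> F \<subseteq> arcs n W \<and> single_valued F \<and>
     (\<forall>x<n. \<exists>r. (x,r) \<in> F\<^sup>* \<and> r \<notin> Domain F)"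

lemma arcs_sub: "arcs n W \<subseteq> {..<n} \<times> {..<n}"
  unfolding arcs_def by auto

lemma forest_sub: "forest n W F \<Longrightarrow> F \<subseteq> {..<n} \<times> {..<n}"
  unfolding forest_def using arcs_sub by blast

lemma forest_finite: assumes "forest n W F" shows "finite F"
  using forest_sub[OF assms] by (rule finite_subset) auto

lemma forest_arc_lt: "forest n W F \<Longrightarrow> (a,b) \<in> F \<Longrightarrow> a < n \<and> b < n"
  using forest_sub by blast

lemma forest_rtrancl_lt: assumes f: "forest n W F" shows "(a,b) \<in> F\<^sup>* \<Longrightarrow> a < n \<Longrightarrow> b < n"
  by (induction rule: rtrancl_induct) (auto dest: forest_arc_lt[OF f])

lemma root_unique:
  assumes "single_valued F" "(x,r1) \<in> F\<^sup>*" "r1 \<notin> Domain F" "(x,r2) \<in> F\<^sup>*" "r2 \<notin> Domain F"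
  shows "r1 = r2"
proof -
  from single_valued_confluent[OF assms(1) assms(2) assms(4)]
  have "(r1,r2) \<in> F\<^sup>* \<or> (r2,r1) \<in> F\<^sup>*" .
  moreover have "a = b" if "(a,b) \<in> F\<^sup>*" "a \<notin> Domain F" for a b
    using that by (auto elim: converse_rtranclE)
  ultimately show ?thesis
    using assms(3,5) by metis
qed

lemma rootof_eq:
  assumes "single_valued F" "(x,r) \<in> F\<^sup>*" "r \<notin> Domain F"
  shows "rootof F x = r"
  unfolding rootof_def
proof (rule the_equality)
  show "(x,r) \<in> F\<^sup>* \<and> r \<notin> Domain F" using assms by simp
  fix r' assume "(x,r') \<in> F\<^sup>* \<and> r' \<notin> Domain F"
  then show "r' = r" using root_unique[OF assms(1), of x r' r] assms(2,3) by simp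
qed

lemma rootof_props:
  assumes "forest n W F" "x < n"
  shows "(x, rootof F x) \<in> F\<^sup>*" "rootof F x \<notin> Domain F"
proof -
  from assms obtain r where r: "(x,r) \<in> F\<^sup>*" "r \<notin> Domain F" unfolding forest_def by blast
  have sv: "single_valued F" using assms unfolding forest_def by blast
  have "rootof F x = r" by (rule rootof_eq[OF sv r])
  then show "(x, rootof F x) \<in> F\<^sup>*" "rootof F x \<notin> Domain F" using r by auto
qed

lemma rootof_lt: "forest n W F \<Longrightarrow> x < n \<Longrightarrow> rootof F x < n"
  using rootof_props forest_rtrancl_lt by blast

lemma rootof_root: "single_valued F \<Longrightarrow> x \<notin> Domain F \<Longrightarrow> rootof F x = x"
  by (rule rootof_eq) auto

lemma rootof_step:
  assumes f: "forest n W F" and ab: "(a,b) \<in> F"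
  shows "rootof F a = rootof F b"
proof -
  have sv: "single_valued F" using f unfolding forest_def by blast
  have an: "a < n" using forest_arc_lt[OF f ab] by simp
  note rp = rootof_props[OF f an]
  have "a \<noteq> rootof F a" using rp(2) ab by auto
  then obtain c where c: "(a,c) \<in> F" "(c, rootof F a) \<in> F\<^sup>*"
    using rp(1) by (auto elim: converse_rtranclE)
  have "c = b" using sv c(1) ab unfolding single_valued_def by blast
  then show ?thesis using rootof_eq[OF sv _ rp(2)] c(2) by simp
qed

lemma rootof_rtrancl:
  assumes f: "forest n W F" and ab: "(a,b) \<in> F\<^sup>*"
  shows "rootof F a = rootof F b"
  using ab
proof (induction rule: rtrancl_induct)
  case (step y z)
  then show ?case using rootof_step[OF f step(2)] by simp
qed simp

lemma rootof_weak:
  assumes f: "forest n W F" and ab: "(a,b) \<in> (F \<union> F\<inverse>)\<^sup>*"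
  shows "rootof F a = rootof F b"
  using ab
proof (induction rule: rtrancl_induct)
  case base
  then show ?case by simp
next
  case (step y z)
  from step(2) show ?case
  proof
    assume "(y,z) \<in> F" then show ?thesis using rootof_step[OF f] step(3) by simp
  next
    assume "(y,z) \<in> F\<inverse>" then have "(z,y) \<in> F" by simp
    then show ?thesis using rootof_step[OF f] step(3) by simp
  qed
qed

lemma sym_rtrancl_Un_conv:
  assumes "(x,y) \<in> (A \<union> A\<inverse>)\<^sup>*" shows "(y,x) \<in> (A \<union> A\<inverse>)\<^sup>*"
  using assms
proof (induction rule: rtrancl_induct)
  case (step a b)
  have "(b,a) \<in> A \<union> A\<inverse>" using step(2) by blast
  then show ?case using step(3) by (rule converse_rtrancl_into_rtrancl)
qed simp

lemma weak_comp_mem: "u \<in> weak_comp V F v \<longleftrightarrow> u \<in> V \<and> (v,u) \<in> (F \<union> F\<inverse>)\<^sup>*"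
  unfolding weak_comp_def by simp

lemma in_forest_imp_forest:
  assumes inf: "in_forest n W F"
  shows "forest n W F"
proof -
  have Fa: "F \<subseteq> arcs n W" using inf unfolding in_forest_def by blast
  have Fn: "F \<subseteq> {..<n} \<times> {..<n}" using Fa arcs_sub by blast
  have ct: "converging_tree (weak_comp {..<n} F x) (F \<inter> (weak_comp {..<n} F x \<times> weak_comp {..<n} F x))"
    if "x < n" for x
    using inf that unfolding in_forest_def weak_comps_def by blast
  have xin: "x \<in> weak_comp {..<n} F x" if "x < n" for x
    using that unfolding weak_comp_def by simp
  have closed: "w \<in> weak_comp {..<n} F x" if "u \<in> weak_comp {..<n} F x" "(u,w) \<in> F \<or> (w,u) \<in> F" for x u w
  proof -
    have w: "w < n" using that(2) Fn by blast
    have "(u,w) \<in> F \<union> F\<inverse>" using that(2) by blast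
    then have "(x,w) \<in> (F \<union> F\<inverse>)\<^sup>*" using that(1) unfolding weak_comp_def
      by (auto intro: rtrancl_into_rtrancl)
    then show ?thesis using w unfolding weak_comp_def by simp
  qed
  have main: "(\<forall>y z. (x,y) \<in> F \<longrightarrow> (x,z) \<in> F \<longrightarrow> y = z) \<and> (\<exists>r. (x,r) \<in> F\<^sup>* \<and> r \<notin> Domain F)"
    if xn: "x < n" for x
  proof -
    define C where "C = weak_comp {..<n} F x"
    define A where "A = F \<inter> (C \<times> C)"
    have ctC: "converging_tree C A" using ct[OF xn] unfolding C_def A_def .
    have finC: "finite C" and AC: "A \<subseteq> C \<times> C" and wc: "weakly_connected C A"
      and ex: "\<exists>r\<in>C. outdeg A r = 0 \<and> (\<forall>v\<in>C - {r}. outdeg A v = 1)"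
      using ctC unfolding converging_tree_def by auto
    from ex obtain r where r1: "r \<in> C" and r23: "outdeg A r = 0 \<and> (\<forall>v\<in>C - {r}. outdeg A v = 1)" ..
    from r1 r23 have r: "r \<in> C" "outdeg A r = 0" "\<forall>v\<in>C - {r}. outdeg A v = 1" by simp_all
    have finA: "finite {w. (v,w) \<in> A}" for v
      by (rule finite_subset[of _ C]) (use AC in auto, use finC in auto)
    have noout: "(r,w) \<notin> A" for w
    proof
      assume "(r,w) \<in> A"
      then have "{w. (r,w) \<in> A} \<noteq> {}" by blast
      with finA[of r] have "outdeg A r \<noteq> 0" unfolding outdeg_def by simp
      with r(2) show False by simp
    qed
    have one: "y = z" if "v \<in> C" "(v,y) \<in> A" "(v,z) \<in> A" for v y z
    proof -
      have "v \<noteq> r" using noout that by blast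
      then have "card {w. (v,w) \<in> A} = 1" using r(3) that(1) unfolding outdeg_def by simp
      then obtain q where q: "{w. (v,w) \<in> A} = {q}" by (auto simp: card_Suc_eq)
      have "y \<in> {w. (v,w) \<in> A}" "z \<in> {w. (v,w) \<in> A}" using that by auto
      then show ?thesis unfolding q by simp
    qed
    have reach: "(y,r) \<in> A\<^sup>*" if "y \<in> C" for y
    proof -
      have "(r,y) \<in> (A \<union> A\<inverse>)\<^sup>*" using wc r(1) that unfolding weakly_connected_def by blast
      then show ?thesis
      proof (induction rule: rtrancl_induct)
        case base then show ?case by simp
      next
        case (step a b)
        from step(2) show ?case
        proof
          assume ab: "(a,b) \<in> A"
          then have aC: "a \<in> C" using AC by blast
          have "a \<noteq> r" using noout ab by blast
          with step(3) obtain c where c: "(a,c) \<in> A" "(c,r) \<in> A\<^sup>*"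
            by (auto elim: converse_rtranclE)
          have "c = b" using one[OF aC c(1) ab] .
          then show ?thesis using c(2) by simp
        next
          assume "(a,b) \<in> A\<inverse>"
          then have "(b,a) \<in> A" by simp
          then show ?thesis using step(3) by (rule converse_rtrancl_into_rtrancl)
        qed
      qed
    qed
    have xC: "x \<in> C" unfolding C_def using xin[OF xn] .
    have AF: "A \<subseteq> F" unfolding A_def by blast
    have "(x,r) \<in> F\<^sup>*" using reach[OF xC] rtrancl_mono[OF AF] by blast
    moreover have "r \<notin> Domain F"
    proof
      assume "r \<in> Domain F"
      then obtain w where w: "(r,w) \<in> F" by blast
      have "w \<in> C" using closed[of r x w] r(1) w unfolding C_def by blast
      then have "(r,w) \<in> A" using w r(1) unfolding A_def by blast
      then show False using noout by blast
    qed
    moreover have "\<forall>y z. (x,y) \<in> F \<longrightarrow> (x,z) \<in> F \<longrightarrow> y = z"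
    proof (intro allI impI)
      fix y z assume y: "(x,y) \<in> F" and z: "(x,z) \<in> F"
      have "y \<in> C" "z \<in> C" using closed[of x x] xC y z unfolding C_def by blast+
      then have "(x,y) \<in> A" "(x,z) \<in> A" using xC y z unfolding A_def by blast+
      then show "y = z" using one[OF xC] by blast
    qed
    ultimately show ?thesis by blast
  qed
  have sv: "single_valued F"
    unfolding single_valued_def
  proof (intro allI impI)
    fix x y z assume "(x,y) \<in> F" "(x,z) \<in> F"
    moreover then have "x < n" using Fn by blast
    ultimately show "y = z" using main by blast
  qed
  show ?thesis unfolding forest_def using Fa sv main by blast
qed

lemma weak_lt:
  assumes f: "forest n W F" and "(a,b) \<in> F \<union> F\<inverse>"
  shows "a < n" "b < n"
  using assms forest_arc_lt[OF f] by auto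

lemma weak_restrict:
  assumes f: "forest n W F" and vn: "v < n" and p: "(v,x) \<in> (F \<union> F\<inverse>)\<^sup>*"
  shows "(v,x) \<in> ((F \<inter> (weak_comp {..<n} F v \<times> weak_comp {..<n} F v)) \<union>
                  (F \<inter> (weak_comp {..<n} F v \<times> weak_comp {..<n} F v))\<inverse>)\<^sup>*"
  using p
proof (induction rule: rtrancl_induct)
  case base then show ?case by simp
next
  case (step a b)
  have an: "a < n" "b < n" using weak_lt[OF f step(2)] by auto
  have aC: "a \<in> weak_comp {..<n} F v" using step(1) an unfolding weak_comp_def by simp
  have "(v,b) \<in> (F \<union> F\<inverse>)\<^sup>*" using step(1,2) by (rule rtrancl_into_rtrancl)
  then have bC: "b \<in> weak_comp {..<n} F v" using an unfolding weak_comp_def by simp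
  have "(a,b) \<in> (F \<inter> (weak_comp {..<n} F v \<times> weak_comp {..<n} F v)) \<union>
                  (F \<inter> (weak_comp {..<n} F v \<times> weak_comp {..<n} F v))\<inverse>"
    using step(2) aC bC by blast
  then show ?case using step(3) by (rule rtrancl_into_rtrancl[rotated])
qed

lemma forest_imp_in_forest:
  assumes f: "forest n W F"
  shows "in_forest n W F"
proof -
  have sv: "single_valued F" using f unfolding forest_def by blast
  have tree: "converging_tree C (F \<inter> (C \<times> C))" if Cin: "C \<in> weak_comps {..<n} F" for C
  proof -
    obtain v where vn: "v < n" and Cv: "C = weak_comp {..<n} F v"
      using Cin unfolding weak_comps_def by blast
    define A where "A = F \<inter> (C \<times> C)"
    have finC: "finite C" unfolding Cv weak_comp_def by simp
    have AC: "A \<subseteq> C \<times> C" unfolding A_def by blast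
    have conn: "(v,x) \<in> (A \<union> A\<inverse>)\<^sup>*" if "x \<in> C" for x
      using weak_restrict[OF f vn, of x] that unfolding A_def Cv weak_comp_def by simp
    have wc: "weakly_connected C A"
      unfolding weakly_connected_def
    proof (intro ballI)
      fix x y assume "x \<in> C" "y \<in> C"
      have "(x,v) \<in> (A \<union> A\<inverse>)\<^sup>*" using sym_rtrancl_Un_conv[OF conn[OF \<open>x \<in> C\<close>]] .
      then show "(x,y) \<in> (A \<union> A\<inverse>)\<^sup>*" using conn[OF \<open>y \<in> C\<close>] by (rule rtrancl_trans)
    qed
    define r where "r = rootof F v"
    note rp = rootof_props[OF f vn]
    have rn: "r < n" unfolding r_def using rootof_lt[OF f vn] .
    have "(v,r) \<in> (F \<union> F\<inverse>)\<^sup>*" using rp(1) rtrancl_mono[of F "F \<union> F\<inverse>"] unfolding r_def by blast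
    then have rC: "r \<in> C" unfolding Cv weak_comp_def using rn by simp
    have "{w. (r,w) \<in> A} = {}" unfolding A_def using rp(2) unfolding r_def by blast
    then have "outdeg A r = 0" unfolding outdeg_def by simp
    moreover have "outdeg A u = 1" if uC: "u \<in> C - {r}" for u
    proof -
      have un: "u < n" and vu: "(v,u) \<in> (F \<union> F\<inverse>)\<^sup>*" using uC unfolding Cv weak_comp_def by auto
      have "rootof F u = r" using rootof_weak[OF f vu] unfolding r_def by simp
      moreover have "u \<noteq> r" using uC by simp
      ultimately have "u \<in> Domain F" using rootof_root[OF sv] by metis
      then obtain s where s: "(u,s) \<in> F" by blast
      have sn: "s < n" using forest_arc_lt[OF f s] by simp
      have "(v,s) \<in> (F \<union> F\<inverse>)\<^sup>*" using vu s by (auto intro: rtrancl_into_rtrancl)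
      then have sC: "s \<in> C" unfolding Cv weak_comp_def using sn by simp
      have "{w. (u,w) \<in> A} = {s}"
        using s sC uC sv unfolding A_def single_valued_def by blast
      then show ?thesis unfolding outdeg_def by simp
    qed
    ultimately show ?thesis
      unfolding converging_tree_def A_def[symmetric] using finC AC wc rC by blast
  qed
  show ?thesis unfolding in_forest_def using f tree unfolding forest_def by blast
qed

lemma in_forest_iff: "in_forest n W F \<longleftrightarrow> forest n W F"
  using in_forest_imp_forest forest_imp_in_forest by blast

lemma rooted_at_iff:
  assumes f: "forest n W F" and i: "i < n"
  shows "rooted_at n F i j \<longleftrightarrow> j = rootof F i"
proof -
  define C where "C = weak_comp {..<n} F i"
  have sv: "single_valued F" using f unfolding forest_def by blast
  have finC: "finite C" unfolding C_def weak_comp_def by simp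
  show ?thesis
  proof
    assume ra: "rooted_at n F i j"
    have jC: "j \<in> C" and od: "outdeg (F \<inter> (C \<times> C)) j = 0"
      using ra unfolding rooted_at_def C_def by auto
    have jn: "j < n" and ij: "(i,j) \<in> (F \<union> F\<inverse>)\<^sup>*" using jC unfolding C_def weak_comp_def by auto
    have "j \<notin> Domain F"
    proof
      assume "j \<in> Domain F"
      then obtain w where w: "(j,w) \<in> F" by blast
      have wn: "w < n" using forest_arc_lt[OF f w] by simp
      have "(i,w) \<in> (F \<union> F\<inverse>)\<^sup>*" using ij w by (auto intro: rtrancl_into_rtrancl)
      then have "w \<in> C" unfolding C_def weak_comp_def using wn by simp
      then have "w \<in> {x. (j,x) \<in> F \<inter> (C \<times> C)}" using w jC by blast
      moreover have "finite {x. (j,x) \<in> F \<inter> (C \<times> C)}"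
        by (rule finite_subset[of _ C]) (auto simp: finC)
      ultimately have "card {x. (j,x) \<in> F \<inter> (C \<times> C)} \<noteq> 0" by (metis card_0_eq empty_iff)
      with od show False unfolding outdeg_def by simp
    qed
    then have "rootof F j = j" by (rule rootof_root[OF sv])
    moreover have "rootof F i = rootof F j" by (rule rootof_weak[OF f ij])
    ultimately show "j = rootof F i" by simp
  next
    assume j: "j = rootof F i"
    note rp = rootof_props[OF f i]
    have jn: "j < n" using rootof_lt[OF f i] j by simp
    have "(i,j) \<in> (F \<union> F\<inverse>)\<^sup>*" using rp(1) rtrancl_mono[of F "F \<union> F\<inverse>"] j by blast
    then have jC: "j \<in> C" unfolding C_def weak_comp_def using jn by simp
    have e: "{x. (j,x) \<in> F \<inter> (C \<times> C)} = {}" using rp(2) j by blast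
    have "outdeg (F \<inter> (C \<times> C)) j = 0" unfolding outdeg_def e by simp
    then show "rooted_at n F i j" unfolding rooted_at_def C_def[symmetric] using jC by simp
  qed
qed

definition roots :: "nat \<Rightarrow> (nat \<times> nat) set \<Rightarrow> nat set" where
  "roots n F = {x. x < n \<and> x \<notin> Domain F}"

lemma card_forest:
  assumes f: "forest n W F"
  shows "card F + card (roots n F) = n"
proof -
  have sv: "single_valued F" using f unfolding forest_def by blast
  have inj: "inj_on fst F" using sv unfolding inj_on_def single_valued_def by auto
  have "card F = card (fst ` F)" using card_image[OF inj] by simp
  also have "fst ` F = Domain F" by (simp add: Domain_fst)
  finally have cF: "card F = card (Domain F)" .
  have D: "Domain F \<subseteq> {..<n}" using forest_sub[OF f] by blast
  have "Domain F \<union> roots n F = {..<n}" using D unfolding roots_def by auto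
  moreover have "Domain F \<inter> roots n F = {}" unfolding roots_def by auto
  moreover have "finite (Domain F)" using D finite_subset by blast
  moreover have "finite (roots n F)" unfolding roots_def by simp
  ultimately have "card (Domain F) + card (roots n F) = n"
    using card_Un_disjoint[of "Domain F" "roots n F"] by simp
  then show ?thesis using cF by simp
qed

lemma weak_comp_eq:
  assumes "(v,r) \<in> (F \<union> F\<inverse>)\<^sup>*"
  shows "weak_comp V F v = weak_comp V F r"
proof -
  have rv: "(r,v) \<in> (F \<union> F\<inverse>)\<^sup>*" using sym_rtrancl_Un_conv[OF assms] .
  show ?thesis unfolding weak_comp_def
    using rtrancl_trans[OF assms] rtrancl_trans[OF rv] by blast
qed

lemma card_comps:
  assumes f: "forest n W F"
  shows "card (weak_comps {..<n} F) = card (roots n F)"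
proof -
  have sv: "single_valued F" using f unfolding forest_def by blast
  have eq: "weak_comps {..<n} F = weak_comp {..<n} F ` roots n F"
  proof
    show "weak_comp {..<n} F ` roots n F \<subseteq> weak_comps {..<n} F"
      unfolding weak_comps_def roots_def by auto
    show "weak_comps {..<n} F \<subseteq> weak_comp {..<n} F ` roots n F"
    proof
      fix C assume "C \<in> weak_comps {..<n} F"
      then obtain v where vn: "v < n" and C: "C = weak_comp {..<n} F v" unfolding weak_comps_def by auto
      note rp = rootof_props[OF f vn]
      have "(v, rootof F v) \<in> (F \<union> F\<inverse>)\<^sup>*" using rp(1) rtrancl_mono[of F "F \<union> F\<inverse>"] by blast
      then have "C = weak_comp {..<n} F (rootof F v)" using C weak_comp_eq by metis
      moreover have "rootof F v \<in> roots n F" unfolding roots_def using rp(2) rootof_lt[OF f vn] by simp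
      ultimately show "C \<in> weak_comp {..<n} F ` roots n F" by blast
    qed
  qed
  have inj: "inj_on (weak_comp {..<n} F) (roots n F)"
  proof (rule inj_onI)
    fix r1 r2 assume r1: "r1 \<in> roots n F" and r2: "r2 \<in> roots n F"
      and e: "weak_comp {..<n} F r1 = weak_comp {..<n} F r2"
    have "r2 \<in> weak_comp {..<n} F r2" using r2 unfolding roots_def weak_comp_def by simp
    then have "r2 \<in> weak_comp {..<n} F r1" using e by simp
    then have p: "(r1,r2) \<in> (F \<union> F\<inverse>)\<^sup>*" unfolding weak_comp_def by simp
    have "rootof F r1 = rootof F r2" by (rule rootof_weak[OF f p])
    moreover have "rootof F r1 = r1" "rootof F r2 = r2"
      using r1 r2 rootof_root[OF sv] unfolding roots_def by auto
    ultimately show "r1 = r2" by simp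
  qed
  show ?thesis unfolding eq using card_image[OF inj] .
qed

lemma card_forest_comps:
  assumes f: "forest n W F"
  shows "card F + card (weak_comps {..<n} F) = n"
  using card_forest[OF f] card_comps[OF f] by simp

lemma forest_empty: "forest n W {}"
  unfolding forest_def single_valued_def by auto

lemma forests_finite: "finite {F. forest n W F}"
proof -
  have "{F. forest n W F} \<subseteq> Pow ({..<n} \<times> {..<n})" using forest_sub by blast
  then show ?thesis by (rule finite_subset) simp
qed

lemma forest_subset:
  assumes f: "forest n W F" and GF: "G \<subseteq> F"
  shows "forest n W G"
proof -
  have sv: "single_valued F" using f unfolding forest_def by blast
  have svG: "single_valued G" using single_valued_subset[OF GF sv] .
  have reach: "\<exists>y. (x,y) \<in> G\<^sup>* \<and> y \<notin> Domain G" if xn: "x < n" for x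
  proof -
    note rp = rootof_props[OF f xn]
    show ?thesis using rp(1)
    proof (induction rule: converse_rtrancl_induct)
      case base
      then show ?case using rp(2) GF by blast
    next
      case (step y z)
      show ?case
      proof (cases "y \<in> Domain G")
        case True
        then obtain z' where z': "(y,z') \<in> G" by blast
        then have "z' = z" using sv step(1) GF unfolding single_valued_def by blast
        then show ?thesis using step(3) z' by (meson converse_rtrancl_into_rtrancl)
      next
        case False
        then show ?thesis by blast
      qed
    qed
  qed
  show ?thesis unfolding forest_def using f GF svG reach unfolding forest_def by blast
qed

lemma forest_dim_facts:
  shows "\<exists>F. forest n W F \<and> card F = n - forest_dim n W"
    and "forest n W F \<Longrightarrow> card F \<le> n - forest_dim n W"
proof -
  define S where "S = {card (weak_comps {..<n} F) | F. in_forest n W F}"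
  have S: "S = (\<lambda>F. card (weak_comps {..<n} F)) ` {F. forest n W F}"
    unfolding S_def in_forest_iff by blast
  have finS: "finite S" unfolding S using forests_finite by simp
  have neS: "S \<noteq> {}" unfolding S using forest_empty by blast
  have d: "forest_dim n W = Min S" unfolding forest_dim_def S_def by simp
  have "Min S \<in> S" using Min_in[OF finS neS] .
  then obtain F0 where F0: "forest n W F0" "Min S = card (weak_comps {..<n} F0)" unfolding S by blast
  then show "\<exists>F. forest n W F \<and> card F = n - forest_dim n W"
    using card_forest_comps[OF F0(1)] d by (intro exI[of _ F0]) auto
  assume f: "forest n W F"
  have "card (weak_comps {..<n} F) \<in> S" unfolding S using f by blast
  then have "Min S \<le> card (weak_comps {..<n} F)" using Min_le[OF finS] by blast
  then show "card F \<le> n - forest_dim n W" using card_forest_comps[OF f] d by simp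
qed

lemma forest_exists_card:
  assumes "k \<le> n - forest_dim n W"
  shows "\<exists>F. forest n W F \<and> card F = k"
proof -
  obtain F0 where F0: "forest n W F0" "card F0 = n - forest_dim n W" using forest_dim_facts(1) by blast
  obtain G where G: "G \<subseteq> F0" "card G = k" using obtain_subset_with_card_n[of k F0] assms F0(2) by metis
  show ?thesis using forest_subset[OF F0(1) G(1)] G(2) by blast
qed

lemma rtrancl_avoid:
  assumes "(x,z) \<in> R\<^sup>*"
  shows "(x,z) \<in> {(a,b) \<in> R. a \<noteq> i}\<^sup>* \<or> (x,i) \<in> {(a,b) \<in> R. a \<noteq> i}\<^sup>*"
  using assms
proof (induction rule: rtrancl_induct)
  case base then show ?case by simp
next
  case (step y z)
  show ?case
  proof (cases "(x,i) \<in> {(a,b) \<in> R. a \<noteq> i}\<^sup>*")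
    case True then show ?thesis by simp
  next
    case False
    then have xy: "(x,y) \<in> {(a,b) \<in> R. a \<noteq> i}\<^sup>*" using step(3) by simp
    show ?thesis
    proof (cases "y = i")
      case True then show ?thesis using xy by simp
    next
      case False
      then have "(y,z) \<in> {(a,b) \<in> R. a \<noteq> i}" using step(2) by simp
      then show ?thesis using xy by (meson rtrancl_into_rtrancl)
    qed
  qed
qed

lemma no_cycle:
  assumes f: "forest n W F" and isF: "(i,s) \<in> F"
  shows "(s,i) \<notin> F\<^sup>*"
proof
  assume si: "(s,i) \<in> F\<^sup>*"
  have sv: "single_valued F" using f unfolding forest_def by blast
  have bk: "(y,i) \<in> F\<^sup>*" if iy: "(i,y) \<in> F\<^sup>*" for y
    using iy
  proof (induction rule: rtrancl_induct)
    case base then show ?case by simp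
  next
    case (step y z)
    show ?case
    proof (cases "y = i")
      case True
      then have "z = s" using sv step(2) isF unfolding single_valued_def by blast
      then show ?thesis using si by simp
    next
      case False
      with step(3) obtain c where c: "(y,c) \<in> F" "(c,i) \<in> F\<^sup>*" by (auto elim: converse_rtranclE)
      then have "c = z" using sv step(2) unfolding single_valued_def by blast
      then show ?thesis using c(2) by simp
    qed
  qed
  have i_n: "i < n" using forest_arc_lt[OF f isF] by simp
  note rp = rootof_props[OF f i_n]
  have "(rootof F i, i) \<in> F\<^sup>*" using bk[OF rp(1)] .
  then have "rootof F i = i" using rp(2) by (auto elim: converse_rtranclE)
  then show False using rp(2) isF by auto
qed

lemma forest_add:
  assumes f: "forest n W F" and iD: "i \<notin> Domain F" and ip: "(i,p) \<in> arcs n W"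
    and rp: "rootof F p \<noteq> i"
  shows "forest n W (insert (i,p) F)"
    and "x < n \<Longrightarrow> rootof (insert (i,p) F) x = (if rootof F x = i then rootof F p else rootof F x)"
proof -
  define G where "G = insert (i,p) F"
  have sv: "single_valued F" using f unfolding forest_def by blast
  have svG: "single_valued G" using sv iD unfolding G_def single_valued_def by blast
  have pn: "p < n" using ip arcs_sub by blast
  have FG: "F \<subseteq> G" unfolding G_def by blast
  have DG: "Domain G = insert i (Domain F)" unfolding G_def by auto
  have main: "(x, (if rootof F x = i then rootof F p else rootof F x)) \<in> G\<^sup>* \<and>
               (if rootof F x = i then rootof F p else rootof F x) \<notin> Domain G" if xn: "x < n" for x
  proof -
    note rx = rootof_props[OF f xn]
    note rpp = rootof_props[OF f pn]
    have FGs: "F\<^sup>* \<subseteq> G\<^sup>*" using rtrancl_mono[OF FG] .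
    show ?thesis
    proof (cases "rootof F x = i")
      case True
      have "(x,i) \<in> G\<^sup>*" using rx(1) True FGs by auto
      moreover have "(i,p) \<in> G" unfolding G_def by simp
      ultimately have "(x,p) \<in> G\<^sup>*" by (rule rtrancl_into_rtrancl)
      then have "(x, rootof F p) \<in> G\<^sup>*" using rpp(1) FGs by (meson rtrancl_trans subsetD)
      moreover have "rootof F p \<notin> Domain G" using DG rpp(2) rp by simp
      ultimately show ?thesis using True by simp
    next
      case False
      then show ?thesis using rx FGs DG by auto
    qed
  qed
  have "forest n W G"
    unfolding forest_def using f ip svG main unfolding forest_def G_def by blast
  then show "forest n W (insert (i,p) F)" unfolding G_def .
  assume xn: "x < n"
  show "rootof (insert (i,p) F) x = (if rootof F x = i then rootof F p else rootof F x)"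
    using rootof_eq[OF svG] main[OF xn] unfolding G_def by blast
qed

lemma forest_del:
  assumes f: "forest n W F" and isF: "(i,s) \<in> F"
  shows "forest n W (F - {(i,s)})" and "i \<notin> Domain (F - {(i,s)})"
    and "x < n \<Longrightarrow> (x,i) \<notin> F\<^sup>* \<Longrightarrow> rootof (F - {(i,s)}) x = rootof F x"
proof -
  have sv: "single_valued F" using f unfolding forest_def by blast
  show f': "forest n W (F - {(i,s)})" using forest_subset[OF f] by blast
  show iD: "i \<notin> Domain (F - {(i,s)})" using sv isF unfolding single_valued_def by blast
  assume xn: "x < n" and xi: "(x,i) \<notin> F\<^sup>*"
  note rx = rootof_props[OF f xn]
  have sub: "{(a,b) \<in> F. a \<noteq> i} \<subseteq> F - {(i,s)}" by blast
  have sub2: "{(a,b) \<in> F. a \<noteq> i} \<subseteq> F" by blast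
  from rtrancl_avoid[OF rx(1), of i]
  have "(x, rootof F x) \<in> {(a,b) \<in> F. a \<noteq> i}\<^sup>*"
    using xi rtrancl_mono[OF sub2] by blast
  then have "(x, rootof F x) \<in> (F - {(i,s)})\<^sup>*" using rtrancl_mono[OF sub] by blast
  moreover have "rootof F x \<notin> Domain (F - {(i,s)})" using rx(2) by blast
  moreover have "single_valued (F - {(i,s)})" using f' unfolding forest_def by blast
  ultimately show "rootof (F - {(i,s)}) x = rootof F x" using rootof_eq by blast
qed

lemma weight_pos:
  assumes f: "forest n W F"
  shows "weight W F > 0"
proof -
  have "\<forall>e\<in>F. W $$ e > 0" using f unfolding forest_def arcs_def by auto
  then show ?thesis unfolding weight_def by (intro prod_pos) auto
qed

definition succ :: "(nat \<times> nat) set \<Rightarrow> nat \<Rightarrow> nat" where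
  "succ F i = (THE s. (i,s) \<in> F)"

lemma succ_in:
  assumes "single_valued F" "i \<in> Domain F"
  shows "(i, succ F i) \<in> F"
proof -
  obtain s where s: "(i,s) \<in> F" using assms(2) by blast
  have "(THE s. (i,s) \<in> F) = s"
    by (rule the_equality) (use s assms(1) in \<open>auto simp: single_valued_def\<close>)
  then show ?thesis unfolding succ_def using s by simp
qed

lemma succ_eq:
  assumes "single_valued F" "(i,s) \<in> F"
  shows "succ F i = s"
  unfolding succ_def
  by (rule the_equality) (use assms in \<open>auto simp: single_valued_def\<close>)

lemma forest_sv: "forest n W F \<Longrightarrow> single_valued F"
  unfolding forest_def by blast

lemma weight_insert:
  assumes "finite F" "e \<notin> F"
  shows "weight W (insert e F) = weight W F * W $$ e"
  unfolding weight_def using assms by (simp add: prod.insert split_def)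

lemma weight_remove:
  assumes "finite F" "e \<in> F"
  shows "weight W F = weight W (F - {e}) * W $$ e"
  unfolding weight_def using prod.remove[OF assms, of "\<lambda>(i,j). W $$ (i,j)"]
  by (simp add: split_def mult.commute)

lemma add_facts:
  assumes f: "forest n W F" and iD: "i \<notin> Domain F" and ip: "(i,p) \<in> arcs n W"
    and rp: "rootof F p \<noteq> i"
  shows "forest n W (insert (i,p) F)" "card (insert (i,p) F) = Suc (card F)"
    "i \<in> Domain (insert (i,p) F)" "rootof (insert (i,p) F) i = rootof F p"
    "succ (insert (i,p) F) i = p" "insert (i,p) F - {(i,p)} = F"
    "weight W (insert (i,p) F) = weight W F * W $$ (i,p)"
proof -
  have fin: "finite F" using forest_finite[OF f] .
  have nin: "(i,p) \<notin> F" using iD by blast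
  have i_n: "i < n" using ip arcs_sub by blast
  show fG: "forest n W (insert (i,p) F)" using forest_add(1)[OF f iD ip rp] .
  show "card (insert (i,p) F) = Suc (card F)" using fin nin by simp
  show "i \<in> Domain (insert (i,p) F)" by blast
  show "rootof (insert (i,p) F) i = rootof F p"
    using forest_add(2)[OF f iD ip rp i_n] rootof_root[OF forest_sv[OF f] iD] by simp
  show "succ (insert (i,p) F) i = p" using succ_eq[OF forest_sv[OF fG]] by simp
  show "insert (i,p) F - {(i,p)} = F" using nin by blast
  show "weight W (insert (i,p) F) = weight W F * W $$ (i,p)" using weight_insert[OF fin nin] .
qed

lemma remove_facts:
  assumes f: "forest n W G" and iD: "i \<in> Domain G"
  defines "s \<equiv> succ G i"
  shows "forest n W (G - {(i,s)})" "Suc (card (G - {(i,s)})) = card G" "(i,s) \<in> arcs n W"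
    "i \<notin> Domain (G - {(i,s)})" "rootof (G - {(i,s)}) s \<noteq> i" "insert (i,s) (G - {(i,s)}) = G"
proof -
  have sv: "single_valued G" using forest_sv[OF f] .
  have is_: "(i,s) \<in> G" unfolding s_def using succ_in[OF sv iD] .
  have fin: "finite G" using forest_finite[OF f] .
  show "forest n W (G - {(i,s)})" using forest_del(1)[OF f is_] .
  show "Suc (card (G - {(i,s)})) = card G" using fin is_
    by (metis card_Diff1_less card_Suc_Diff1 )
  show "(i,s) \<in> arcs n W" using is_ f unfolding forest_def by blast
  show iD': "i \<notin> Domain (G - {(i,s)})" using forest_del(2)[OF f is_] .
  have sn: "s < n" using forest_arc_lt[OF f is_] by simp
  have "rootof (G - {(i,s)}) s = rootof G s" using forest_del(3)[OF f is_ sn no_cycle[OF f is_]] .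
  moreover have "rootof G s \<notin> Domain G" using rootof_props(2)[OF f sn] .
  ultimately show "rootof (G - {(i,s)}) s \<noteq> i" using iD by auto
  show "insert (i,s) (G - {(i,s)}) = G" using is_ by blast
qed

lemma swap_facts:
  assumes f: "forest n W F" and ip: "(i,p) \<in> arcs n W" and iD: "i \<in> Domain F"
    and ne: "rootof F i \<noteq> rootof F p"
  defines "s \<equiv> succ F i"
  defines "G \<equiv> insert (i,p) (F - {(i,s)})"
  shows "forest n W G" "card G = card F" "(i,s) \<in> arcs n W" "i \<in> Domain G"
    "rootof G i = rootof F p" "rootof G s = rootof F i" "succ G i = p"
    "insert (i,s) (G - {(i,p)}) = F" "weight W G * W $$ (i,s) = weight W F * W $$ (i,p)"
proof -
  have sv: "single_valued F" using forest_sv[OF f] .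
  have is_: "(i,s) \<in> F" unfolding s_def using succ_in[OF sv iD] .
  have fin: "finite F" using forest_finite[OF f] .
  define F' where "F' = F - {(i,s)}"
  have f': "forest n W F'" unfolding F'_def using forest_del(1)[OF f is_] .
  have iD': "i \<notin> Domain F'" unfolding F'_def using forest_del(2)[OF f is_] .
  have i_n: "i < n" and sn: "s < n" using forest_arc_lt[OF f is_] by auto
  have pn: "p < n" using ip arcs_sub by blast
  have pi: "(p,i) \<notin> F\<^sup>*"
  proof
    assume "(p,i) \<in> F\<^sup>*"
    then have "rootof F p = rootof F i" using rootof_rtrancl[OF f] by blast
    with ne show False by simp
  qed
  have rF'p: "rootof F' p = rootof F p" unfolding F'_def using forest_del(3)[OF f is_ pn pi] .
  have rFp: "rootof F p \<noteq> i" using rootof_props(2)[OF f pn] iD by auto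
  have rFi: "rootof F i \<noteq> i" using rootof_props(2)[OF f i_n] iD by auto
  have rp': "rootof F' p \<noteq> i" using rF'p rFp by simp
  have G: "G = insert (i,p) F'" unfolding G_def F'_def ..
  note add = add_facts[OF f' iD' ip rp']
  show fG: "forest n W G" unfolding G using add(1) .
  have cF: "Suc (card F') = card F" unfolding F'_def using fin is_
    by (metis card_Suc_Diff1)
  show "card G = card F" unfolding G using add(2) cF by simp
  show "(i,s) \<in> arcs n W" using is_ f unfolding forest_def by blast
  show "i \<in> Domain G" unfolding G by blast
  show "rootof G i = rootof F p" unfolding G using add(4) rF'p by simp
  have "rootof F' s = rootof F s" unfolding F'_def using forest_del(3)[OF f is_ sn no_cycle[OF f is_]] .
  also have "rootof F s = rootof F i" using rootof_step[OF f is_] by simp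
  finally have rF's: "rootof F' s = rootof F i" .
  show "rootof G s = rootof F i" unfolding G using forest_add(2)[OF f' iD' ip rp' sn] rF's rFi by simp
  show "succ G i = p" unfolding G using add(5) .
  show "insert (i,s) (G - {(i,p)}) = F" unfolding G using add(6) is_ unfolding F'_def by blast
  have "weight W F = weight W F' * W $$ (i,s)" unfolding F'_def using weight_remove[OF fin is_] .
  then show "weight W G * W $$ (i,s) = weight W F * W $$ (i,p)" unfolding G using add(7) by simp
qed

definition FS :: "nat \<Rightarrow> real mat \<Rightarrow> nat \<Rightarrow> (nat \<times> nat) set set" where
  "FS n W k = {F. forest n W F \<and> card F = k}"

definition ind :: "bool \<Rightarrow> real" where
  "ind b = (if b then 1 else 0)"

definition Ai :: "nat \<Rightarrow> real mat \<Rightarrow> nat \<Rightarrow> nat set" where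
  "Ai n W i = {p. (i,p) \<in> arcs n W}"

lemma FS_finite: "finite (FS n W k)"
  unfolding FS_def using forests_finite by (rule finite_subset[rotated]) auto

lemma Ai_finite: "finite (Ai n W i)"
  unfolding Ai_def arcs_def by (rule finite_subset[of _ "{..<n}"]) auto

lemma sum_inv_zero:
  fixes g :: "'a \<Rightarrow> real"
  assumes fin: "finite S" and cl: "\<And>x. x \<in> S \<Longrightarrow> \<phi> x \<in> S"
    and inv: "\<And>x. x \<in> S \<Longrightarrow> \<phi> (\<phi> x) = x" and neg: "\<And>x. x \<in> S \<Longrightarrow> g (\<phi> x) = - g x"
  shows "sum g S = 0"
proof -
  have "sum g S = sum (\<lambda>x. g (\<phi> x)) S"
    by (rule sum.reindex_bij_witness[of S \<phi> \<phi>]) (auto simp: cl inv)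
  also have "\<dots> = sum (\<lambda>x. - g x) S" using neg by (rule sum.cong[OF refl])
  also have "\<dots> = - sum g S" by (simp add: sum_negf)
  finally show ?thesis by simp
qed

lemma recur_comb:
  assumes i_n: "i < n" and j_n: "j < n"
  shows "(\<Sum>G\<in>FS n W (Suc k). weight W G * ind (rootof G i = j))
    + (\<Sum>x\<in>FS n W k \<times> Ai n W i. (case x of (F,p) \<Rightarrow>
          weight W F * W $$ (i,p) * (ind (rootof F i = j) - ind (rootof F p = j))))
    = ind (i = j) * (\<Sum>G\<in>FS n W (Suc k). weight W G)"
proof -
  define g where "g = (\<lambda>x. case x of (F,p) \<Rightarrow>
          weight W F * W $$ (i,p) * (ind (rootof F i = j) - ind (rootof F p = j)))"
  define P where "P = FS n W k \<times> Ai n W i"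
  define P' where "P' = {x \<in> P. rootof (fst x) i \<noteq> rootof (fst x) (snd x)}"
  define P2 where "P2 = {x \<in> P'. i \<notin> Domain (fst x)}"
  define P3 where "P3 = {x \<in> P'. i \<in> Domain (fst x)}"
  define G1 where "G1 = {G \<in> FS n W (Suc k). i \<notin> Domain G}"
  define G2 where "G2 = {G \<in> FS n W (Suc k). i \<in> Domain G}"
  have finP: "finite P" unfolding P_def using FS_finite Ai_finite by simp
  have finP': "finite P'" unfolding P'_def using finP by simp
  have finP2: "finite P2" "finite P3" unfolding P2_def P3_def using finP' by simp_all
  have finG: "finite G1" "finite G2" unfolding G1_def G2_def using FS_finite by simp_all
  have s1: "sum g P = sum g P'"
    by (rule sum.mono_neutral_right[OF finP]) (auto simp: P'_def g_def)
  have s2: "sum g P' = sum g P2 + sum g P3"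
  proof -
    have "P' = P2 \<union> P3" "P2 \<inter> P3 = {}" unfolding P2_def P3_def by auto
    then show ?thesis using sum.union_disjoint[OF finP2] by simp
  qed
  define \<phi> where "\<phi> = (\<lambda>(F::(nat\<times>nat) set, p::nat). (insert (i,p) (F - {(i, succ F i)}), succ F i))"
  have s3: "sum g P3 = 0"
  proof (rule sum_inv_zero[OF finP2(2), of \<phi>])
    fix x assume x: "x \<in> P3"
    obtain F p where xe: "x = (F,p)" by (cases x)
    have f: "forest n W F" and cF: "card F = k" and ip: "(i,p) \<in> arcs n W"
      and ne: "rootof F i \<noteq> rootof F p" and iD: "i \<in> Domain F"
      using x unfolding xe P3_def P'_def P_def FS_def Ai_def by auto
    note sw = swap_facts[OF f ip iD ne]
    have phx: "\<phi> (F,p) = (insert (i,p) (F - {(i, succ F i)}), succ F i)" unfolding \<phi>_def xe by simp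
    show "\<phi> x \<in> P3" unfolding xe phx P3_def P'_def P_def FS_def Ai_def
      using sw cF ne by auto
    show "\<phi> (\<phi> x) = x" unfolding xe phx unfolding \<phi>_def using sw(7,8) by simp
    show "g (\<phi> x) = - g x" unfolding xe phx unfolding g_def
      using sw(5,6,9) by (simp add: algebra_simps)
  qed
  define \<psi> where "\<psi> = (\<lambda>(F::(nat\<times>nat) set, p::nat). insert (i,p) F)"
  define \<psi>' where "\<psi>' = (\<lambda>G::(nat\<times>nat) set. (G - {(i, succ G i)}, succ G i))"
  define h where "h = (\<lambda>G. weight W G * (ind (i = j) - ind (rootof G i = j)))"
  have s4: "sum g P2 = sum h G2"
  proof (rule sum.reindex_bij_witness[of P2 \<psi>' \<psi>])
    fix a assume a: "a \<in> P2"
    obtain F p where ae: "a = (F,p)" by (cases a)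
    have f: "forest n W F" and cF: "card F = k" and ip: "(i,p) \<in> arcs n W"
      and ne: "rootof F i \<noteq> rootof F p" and iD: "i \<notin> Domain F"
      using a unfolding ae P2_def P'_def P_def FS_def Ai_def by auto
    have rFi: "rootof F i = i" using rootof_root[OF forest_sv[OF f] iD] .
    have rp: "rootof F p \<noteq> i" using ne rFi by simp
    note ad = add_facts[OF f iD ip rp]
    show "\<psi>' (\<psi> a) = a" unfolding ae \<psi>_def \<psi>'_def using ad(5,6) by simp
    show "\<psi> a \<in> G2" unfolding ae \<psi>_def G2_def FS_def using ad(1,2,3) cF by simp
    show "h (\<psi> a) = g a" unfolding ae \<psi>_def h_def g_def using ad(4,7) rFi by simp
  next
    fix b assume b: "b \<in> G2"
    have f: "forest n W b" and cb: "card b = Suc k" and iD: "i \<in> Domain b"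
      using b unfolding G2_def FS_def by auto
    note rm = remove_facts[OF f iD]
    have rFi: "rootof (b - {(i, succ b i)}) i = i" using rootof_root[OF forest_sv[OF rm(1)] rm(4)] .
    show "\<psi> (\<psi>' b) = b" unfolding \<psi>_def \<psi>'_def using rm(6) by simp
    show "\<psi>' b \<in> P2" unfolding \<psi>'_def P2_def P'_def P_def FS_def Ai_def
      using rm cb rFi by auto
  qed
  have s5: "(\<Sum>G\<in>FS n W (Suc k). weight W G * ind (rootof G i = j))
      = (\<Sum>G\<in>G1. weight W G * ind (i = j)) + (\<Sum>G\<in>G2. weight W G * ind (rootof G i = j))"
  proof -
    have U: "FS n W (Suc k) = G1 \<union> G2" "G1 \<inter> G2 = {}" unfolding G1_def G2_def by auto
    have "(\<Sum>G\<in>G1. weight W G * ind (rootof G i = j)) = (\<Sum>G\<in>G1. weight W G * ind (i = j))"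
    proof (rule sum.cong[OF refl])
      fix G assume "G \<in> G1"
      then have "forest n W G" "i \<notin> Domain G" unfolding G1_def FS_def by auto
      then have "rootof G i = i" using rootof_root forest_sv by blast
      then show "weight W G * ind (rootof G i = j) = weight W G * ind (i = j)" by simp
    qed
    then show ?thesis unfolding U(1) sum.union_disjoint[OF finG U(2)] by simp
  qed
  have s6: "(\<Sum>G\<in>FS n W (Suc k). weight W G) = (\<Sum>G\<in>G1. weight W G) + (\<Sum>G\<in>G2. weight W G)"
  proof -
    have U: "FS n W (Suc k) = G1 \<union> G2" "G1 \<inter> G2 = {}" unfolding G1_def G2_def by auto
    show ?thesis unfolding U(1) sum.union_disjoint[OF finG U(2)] by simp
  qed
  have s7: "(\<Sum>G\<in>G2. weight W G * ind (rootof G i = j)) + sum h G2 = (\<Sum>G\<in>G2. weight W G * ind (i = j))"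
    unfolding h_def sum.distrib[symmetric] by (rule sum.cong[OF refl]) (simp add: algebra_simps)
  have "(\<Sum>G\<in>FS n W (Suc k). weight W G * ind (rootof G i = j)) + sum g P
      = (\<Sum>G\<in>G1. weight W G * ind (i = j)) + (\<Sum>G\<in>G2. weight W G * ind (i = j))"
    using s1 s2 s3 s4 s5 s7 by simp
  also have "\<dots> = ind (i = j) * (\<Sum>G\<in>FS n W (Suc k). weight W G)"
    unfolding s6 by (simp add: sum_distrib_right algebra_simps)
  finally show ?thesis unfolding g_def P_def .
qed

lemma FS_eq: "{F. in_forest n W F \<and> card F = k} = FS n W k"
  unfolding FS_def in_forest_iff by simp

lemma sigma_eq: "sigma n W k = (\<Sum>F\<in>FS n W k. weight W F)"
  unfolding sigma_def FS_eq ..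

lemma Q_entry:
  assumes i: "i < n" and j: "j < n"
  shows "Qmat n W k $$ (i,j) = (\<Sum>F\<in>FS n W k. weight W F * ind (rootof F i = j))"
proof -
  have "{F. in_forest n W F \<and> card F = k \<and> rooted_at n F i j} = {F \<in> FS n W k. rootof F i = j}"
    unfolding FS_def in_forest_iff using rooted_at_iff[OF _ i] by auto
  then have "Qmat n W k $$ (i,j) = (\<Sum>F\<in>{F \<in> FS n W k. rootof F i = j}. weight W F)"
    unfolding Qmat_def using i j by simp
  also have "\<dots> = (\<Sum>F\<in>FS n W k. if rootof F i = j then weight W F else 0)"
    by (rule sum.inter_filter[OF FS_finite])
  also have "\<dots> = (\<Sum>F\<in>FS n W k. weight W F * ind (rootof F i = j))"
    unfolding ind_def by (rule sum.cong) auto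
  finally show ?thesis .
qed

lemma Q_carrier: "Qmat n W k \<in> carrier_mat n n"
  unfolding Qmat_def by simp

lemma L_carrier: "laplacian n W \<in> carrier_mat n n"
  unfolding laplacian_def by simp

lemma Q_dims[simp]: "dim_row (Qmat n W k) = n" "dim_col (Qmat n W k) = n"
  unfolding Qmat_def by simp_all

lemma L_dims[simp]: "dim_row (laplacian n W) = n" "dim_col (laplacian n W) = n"
  unfolding laplacian_def by simp_all

lemma J_carrier: "Jmat n W k \<in> carrier_mat n n"
  unfolding Jmat_def using Q_carrier by simp

lemma LQ_entry:
  assumes diag: "\<forall>i<n. W $$ (i,i) = 0" and nn: "\<forall>i<n. \<forall>j<n. W $$ (i,j) \<ge> 0"
    and i: "i < n" and j: "j < n"
  shows "(laplacian n W * Qmat n W k) $$ (i,j) =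
     (\<Sum>x\<in>FS n W k \<times> Ai n W i. (case x of (F,p) \<Rightarrow>
          weight W F * W $$ (i,p) * (ind (rootof F i = j) - ind (rootof F p = j))))"
proof -
  let ?L = "laplacian n W" and ?Q = "Qmat n W k"
  have "(?L * ?Q) $$ (i,j) = (\<Sum>p\<in>{0..<n}. ?L $$ (i,p) * ?Q $$ (p,j))"
    using i j Q_carrier[of n W k] L_carrier[of n W]
    by (simp add: scalar_prod_def)
  also have "\<dots> = (\<Sum>p\<in>{..<n}. ?L $$ (i,p) * ?Q $$ (p,j))"
    by (simp add: atLeast0LessThan)
  also have "\<dots> = ?L $$ (i,i) * ?Q $$ (i,j) + (\<Sum>p\<in>{..<n} - {i}. ?L $$ (i,p) * ?Q $$ (p,j))"
    using i by (subst sum.remove[of _ i]) auto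
  also have "\<dots> = (\<Sum>p\<in>{..<n} - {i}. W $$ (i,p) * (?Q $$ (i,j) - ?Q $$ (p,j)))"
  proof -
    have "?L $$ (i,i) = (\<Sum>p\<in>{..<n} - {i}. W $$ (i,p))" unfolding laplacian_def using i by simp
    moreover have "\<And>p. p \<in> {..<n} - {i} \<Longrightarrow> ?L $$ (i,p) = - W $$ (i,p)"
      unfolding laplacian_def using i by auto
    ultimately show ?thesis
      by (simp add: sum_distrib_right right_diff_distrib sum_subtractf sum_negf)
  qed
  also have "\<dots> = (\<Sum>p\<in>Ai n W i. W $$ (i,p) * (?Q $$ (i,j) - ?Q $$ (p,j)))"
  proof (rule sum.mono_neutral_right)
    show "finite ({..<n} - {i})" by simp
    show "Ai n W i \<subseteq> {..<n} - {i}" unfolding Ai_def arcs_def using diag i by auto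
    show "\<forall>p\<in>{..<n} - {i} - Ai n W i. W $$ (i,p) * (?Q $$ (i,j) - ?Q $$ (p,j)) = 0"
    proof
      fix p assume "p \<in> {..<n} - {i} - Ai n W i"
      then have "p < n" "\<not> W $$ (i,p) > 0" unfolding Ai_def arcs_def using i by auto
      then have "W $$ (i,p) = 0" using nn i by force
      then show "W $$ (i,p) * (?Q $$ (i,j) - ?Q $$ (p,j)) = 0" by simp
    qed
  qed
  also have "\<dots> = (\<Sum>p\<in>Ai n W i. \<Sum>F\<in>FS n W k.
        weight W F * W $$ (i,p) * (ind (rootof F i = j) - ind (rootof F p = j)))"
  proof (rule sum.cong[OF refl])
    fix p assume "p \<in> Ai n W i"
    then have p: "p < n" unfolding Ai_def arcs_def by auto
    show "W $$ (i,p) * (?Q $$ (i,j) - ?Q $$ (p,j)) = (\<Sum>F\<in>FS n W k.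
        weight W F * W $$ (i,p) * (ind (rootof F i = j) - ind (rootof F p = j)))"
      unfolding Q_entry[OF i j] Q_entry[OF p j]
      by (simp add: sum_distrib_left sum_subtractf[symmetric] algebra_simps)
  qed
  also have "\<dots> = (\<Sum>F\<in>FS n W k. \<Sum>p\<in>Ai n W i.
        weight W F * W $$ (i,p) * (ind (rootof F i = j) - ind (rootof F p = j)))"
    by (rule sum.swap)
  also have "\<dots> = (\<Sum>x\<in>FS n W k \<times> Ai n W i. (case x of (F,p) \<Rightarrow>
          weight W F * W $$ (i,p) * (ind (rootof F i = j) - ind (rootof F p = j))))"
    by (rule sum.cartesian_product)
  finally show ?thesis .
qed

lemma recurrence:
  assumes diag: "\<forall>i<n. W $$ (i,i) = 0" and nn: "\<forall>i<n. \<forall>j<n. W $$ (i,j) \<ge> 0"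
  shows "Qmat n W (Suc k) + laplacian n W * Qmat n W k = sigma n W (Suc k) \<cdot>\<^sub>m 1\<^sub>m n"
proof (rule eq_matI)
  fix i j assume i: "i < dim_row (sigma n W (Suc k) \<cdot>\<^sub>m 1\<^sub>m n)" and j: "j < dim_col (sigma n W (Suc k) \<cdot>\<^sub>m 1\<^sub>m n)"
  then have i: "i < n" and j: "j < n" by auto
  have "(Qmat n W (Suc k) + laplacian n W * Qmat n W k) $$ (i,j)
      = Qmat n W (Suc k) $$ (i,j) + (laplacian n W * Qmat n W k) $$ (i,j)"
    using i j Q_carrier[of n W] L_carrier[of n W] by simp
  also have "\<dots> = ind (i = j) * sigma n W (Suc k)"
    unfolding Q_entry[OF i j] LQ_entry[OF diag nn i j] sigma_eq using recur_comb[OF i j] .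
  also have "\<dots> = (sigma n W (Suc k) \<cdot>\<^sub>m 1\<^sub>m n) $$ (i,j)" using i j unfolding ind_def by simp
  finally show "(Qmat n W (Suc k) + laplacian n W * Qmat n W k) $$ (i,j) = (sigma n W (Suc k) \<cdot>\<^sub>m 1\<^sub>m n) $$ (i,j)" .
qed (auto simp: Q_carrier)

lemma FS_zero: "FS n W 0 = {{}}"
proof -
  have "F = {}" if "forest n W F" "card F = 0" for F
    using that forest_finite by auto
  then show ?thesis unfolding FS_def using forest_empty by auto
qed

lemma Q0: "Qmat n W 0 = 1\<^sub>m n"
proof (rule eq_matI)
  fix i j assume "i < dim_row (1\<^sub>m n)" "j < dim_col (1\<^sub>m n)"
  then have i: "i < n" and j: "j < n" by auto
  have "rootof {} i = i" using rootof_root[of "{}"] by simp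
  then show "Qmat n W 0 $$ (i,j) = 1\<^sub>m n $$ (i,j)"
    unfolding Q_entry[OF i j] FS_zero using i j by (simp add: weight_def ind_def)
qed (auto simp: Q_carrier)

lemma sigma0: "sigma n W 0 = 1"
  unfolding sigma_eq FS_zero by (simp add: weight_def)

lemma FS_big: "k > n - forest_dim n W \<Longrightarrow> FS n W k = {}"
  unfolding FS_def using forest_dim_facts(2) by fastforce

lemma Q_big: "k > n - forest_dim n W \<Longrightarrow> Qmat n W k = 0\<^sub>m n n"
  by (rule eq_matI) (auto simp: Q_entry FS_big Q_carrier[unfolded carrier_mat_def])

lemma sigma_big: "k > n - forest_dim n W \<Longrightarrow> sigma n W k = 0"
  unfolding sigma_eq by (simp add: FS_big)

lemma sigma_pos: "k \<le> n - forest_dim n W \<Longrightarrow> sigma n W k > 0"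
proof -
  assume k: "k \<le> n - forest_dim n W"
  obtain F where F: "forest n W F" "card F = k" using forest_exists_card[OF k] by blast
  have "F \<in> FS n W k" unfolding FS_def using F by simp
  then have "FS n W k \<noteq> {}" by blast
  moreover have "\<forall>G\<in>FS n W k. weight W G > 0" unfolding FS_def using weight_pos by blast
  ultimately show ?thesis unfolding sigma_eq using FS_finite by (intro sum_pos) auto
qed

definition ctr :: "'a::comm_ring_1 mat \<Rightarrow> 'a" where
  "ctr A = (\<Sum>i<dim_row A. A $$ (i,i))"

lemma ctr_mult:
  assumes A: "A \<in> carrier_mat n m" and B: "B \<in> carrier_mat m n"
  shows "ctr (A * B) = (\<Sum>i<n. \<Sum>k<m. A $$ (i,k) * B $$ (k,i))"
proof -
  have "ctr (A * B) = (\<Sum>i<n. (A * B) $$ (i,i))" unfolding ctr_def using A by simp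
  also have "\<dots> = (\<Sum>i<n. \<Sum>k<m. A $$ (i,k) * B $$ (k,i))"
  proof (rule sum.cong[OF refl])
    fix i assume "i \<in> {..<n}"
    then have i: "i < n" by simp
    have "(A * B) $$ (i,i) = row A i \<bullet> col B i" using A B i by simp
    also have "\<dots> = (\<Sum>k\<in>{0..<m}. row A i $ k * col B i $ k)" unfolding scalar_prod_def using B by simp
    also have "\<dots> = (\<Sum>k<m. A $$ (i,k) * B $$ (k,i))"
      using A B i by (intro sum.cong) auto
    finally show "(A * B) $$ (i,i) = (\<Sum>k<m. A $$ (i,k) * B $$ (k,i))" .
  qed
  finally show ?thesis .
qed

lemma ctr_comm:
  assumes A: "A \<in> carrier_mat n m" and B: "B \<in> carrier_mat m n"
  shows "ctr (A * B) = ctr (B * A)"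
  unfolding ctr_mult[OF A B] ctr_mult[OF B A]
  by (subst sum.swap) (simp add: mult.commute)

lemma wit_facts:
  assumes "similar_mat_wit A B S T"
  shows "A \<in> carrier_mat (dim_row A) (dim_row A)" "B \<in> carrier_mat (dim_row A) (dim_row A)"
    "S \<in> carrier_mat (dim_row A) (dim_row A)" "T \<in> carrier_mat (dim_row A) (dim_row A)"
    "S * T = 1\<^sub>m (dim_row A)" "T * S = 1\<^sub>m (dim_row A)" "A = S * B * T"
proof -
  have w: "{A,B,S,T} \<subseteq> carrier_mat (dim_row A) (dim_row A)" "S * T = 1\<^sub>m (dim_row A)"
     "T * S = 1\<^sub>m (dim_row A)" "A = S * B * T"
    using assms[unfolded similar_mat_wit_def Let_def] by blast+
  from w(1) show "A \<in> carrier_mat (dim_row A) (dim_row A)" "B \<in> carrier_mat (dim_row A) (dim_row A)"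
    "S \<in> carrier_mat (dim_row A) (dim_row A)" "T \<in> carrier_mat (dim_row A) (dim_row A)"
    by blast+
  from w(2-4) show "S * T = 1\<^sub>m (dim_row A)" "T * S = 1\<^sub>m (dim_row A)" "A = S * B * T" .
qed

lemma ctr_similar:
  assumes "similar_mat_wit A B S T"
  shows "ctr A = ctr B"
proof -
  let ?n = "dim_row A"
  note wf = wit_facts[OF assms]
  have c: "A \<in> carrier_mat ?n ?n" "B \<in> carrier_mat ?n ?n" "S \<in> carrier_mat ?n ?n"
    "T \<in> carrier_mat ?n ?n" and TS: "T * S = 1\<^sub>m ?n" and AB: "A = S * B * T"
    using wf by blast+
  have "ctr A = ctr ((S * B) * T)" using AB by simp
  also have "\<dots> = ctr (T * (S * B))" by (rule ctr_comm[OF mult_carrier_mat[OF c(3) c(2)] c(4)])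
  also have "T * (S * B) = (T * S) * B" by (rule assoc_mult_mat[symmetric, OF c(4) c(3) c(2)])
  also have "\<dots> = B" unfolding TS by (rule left_mult_one_mat[OF c(2)])
  finally show ?thesis .
qed

lemma prod_01:
  fixes xs :: "complex list"
  assumes "\<forall>a\<in>set xs. a = 0 \<or> a = 1"
  shows "(\<Prod>a\<leftarrow>xs. [:-a,1:]) = [:-1,1:] ^ length (filter (\<lambda>a. a = 1) xs) * [:0,1:] ^ length (filter (\<lambda>a. a \<noteq> 1) xs)"
    "sum_list xs = of_nat (length (filter (\<lambda>a. a = 1) xs))"
  using assms
proof (induction xs)
  case Nil
  { case 1 then show ?case by simp }
  { case 2 then show ?case by simp }
next
  case (Cons x xs)
  { case 1
    then have IH: "(\<Prod>a\<leftarrow>xs. [:-a,1:]) = [:-1,1:] ^ length (filter (\<lambda>a. a = 1) xs) * [:0,1:] ^ length (filter (\<lambda>a. a \<noteq> 1) xs)"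
      using Cons.IH by simp
    from 1 have "x = 0 \<or> x = 1" by simp
    then show ?case
    proof
      assume "x = 0" then show ?thesis using IH by (simp add: algebra_simps)
    next
      assume "x = 1" then show ?thesis using IH by (simp add: algebra_simps)
    qed }
  { case 2
    then have IH: "sum_list xs = of_nat (length (filter (\<lambda>a. a = 1) xs))" using Cons.IH by simp
    from 2 have "x = 0 \<or> x = 1" by simp
    then show ?case using IH by auto }
qed

lemma idem_charpoly:
  fixes P :: "real mat"
  assumes P: "P \<in> carrier_mat n n" and idem: "P * P = P" and tr: "mat_trace P = real d"
  shows "char_poly P = [:-1,1:] ^ d * [:0,1:] ^ (n - d)" "d \<le> n"
proof -
  define Pc :: "complex mat" where "Pc = of_real_hom.mat_hom P"
  have Pc: "Pc \<in> carrier_mat n n" unfolding Pc_def using P by simp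
  have "Pc * Pc = of_real_hom.mat_hom (P * P)" unfolding Pc_def by (rule of_real_hom.mat_hom_mult[OF P P, symmetric])
  then have idc: "Pc * Pc = Pc" unfolding idem Pc_def .
  obtain as where cp: "char_poly Pc = (\<Prod>a\<leftarrow>as. [:- a, 1:])" using char_poly_factorized[OF Pc] by blast
  obtain n_as where jnf: "jordan_nf Pc n_as" using jordan_nf_exists[OF Pc cp] by blast
  define Jm where "Jm = jordan_matrix n_as"
  have "similar_mat Pc Jm" using jnf unfolding jordan_nf_def Jm_def by simp
  then obtain S T where wit: "similar_mat_wit Pc Jm S T" unfolding similar_mat_def by blast
  have Jc: "Jm \<in> carrier_mat n n" using wit Pc unfolding similar_mat_wit_def Let_def by auto
  have dimJ: "sum_list (map fst n_as) = n" using carrier_matD(1)[OF Jc] unfolding Jm_def by simp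
  have pw: "similar_mat_wit (Jm ^\<^sub>m 2) (Pc ^\<^sub>m 2) T S"
    using similar_mat_wit_pow[OF similar_mat_wit_sym[OF wit]] .
  have wit2: "similar_mat_wit Jm Pc T S" using similar_mat_wit_sym[OF wit] .
  have "Pc ^\<^sub>m 2 = Pc" using idc Pc by (simp add: numeral_2_eq_2)
  then have "Jm ^\<^sub>m 2 = T * Pc * S" using pw unfolding similar_mat_wit_def Let_def by simp
  also have "\<dots> = Jm" using wit2 unfolding similar_mat_wit_def Let_def by simp
  finally have "Jm ^\<^sub>m 2 = Jm" .
  then have idJ: "Jm * Jm = Jm" using Jc by (simp add: numeral_2_eq_2)
  have ut: "Jm $$ (i,j) = 0" if "i < n" "j < i" for i j
    using jordan_matrix_upper_triangular[of i n_as j] that dimJ unfolding Jm_def by simp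
  have diag01: "Jm $$ (i,i) = 0 \<or> Jm $$ (i,i) = 1" if i: "i < n" for i
  proof -
    have "(Jm * Jm) $$ (i,i) = (\<Sum>k\<in>{0..<n}. Jm $$ (i,k) * Jm $$ (k,i))"
      using Jc i by (simp add: scalar_prod_def)
    also have "\<dots> = Jm $$ (i,i) * Jm $$ (i,i) + (\<Sum>k\<in>{0..<n} - {i}. Jm $$ (i,k) * Jm $$ (k,i))"
      using i by (subst sum.remove[of _ i]) auto
    also have "(\<Sum>k\<in>{0..<n} - {i}. Jm $$ (i,k) * Jm $$ (k,i)) = 0"
    proof (rule sum.neutral, rule ballI)
      fix k assume k: "k \<in> {0..<n} - {i}"
      show "Jm $$ (i,k) * Jm $$ (k,i) = 0"
      proof (cases "k < i")
        case True then show ?thesis using ut[OF i True] by simp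
      next
        case False then have "i < k" using k by auto
        then show ?thesis using ut[of k i] k by simp
      qed
    qed
    finally have "Jm $$ (i,i) * Jm $$ (i,i) = Jm $$ (i,i)" using idJ by simp
    then have "Jm $$ (i,i) * (Jm $$ (i,i) - 1) = 0" by (simp add: algebra_simps)
    then show ?thesis by simp
  qed
  define xs where "xs = diag_mat Jm"
  have lxs: "length xs = n" unfolding xs_def diag_mat_def using Jc by simp
  have xs01: "\<forall>a\<in>set xs. a = 0 \<or> a = 1"
    unfolding xs_def diag_mat_def using diag01 Jc by auto
  have utJ: "upper_triangular Jm" unfolding upper_triangular_def using ut Jc by auto
  have cpJ: "char_poly Jm = (\<Prod>a\<leftarrow>xs. [:-a,1:])" unfolding xs_def by (rule char_poly_upper_triangular[OF Jc utJ])
  have cpPc: "char_poly Pc = char_poly Jm" by (rule char_poly_similar) (use wit in \<open>auto simp: similar_mat_def\<close>)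
  have "ctr Pc = ctr Jm" by (rule ctr_similar[OF wit])
  also have "ctr Jm = sum_list xs"
    unfolding ctr_def xs_def diag_mat_def using Jc
    by (simp add: sum_list_distinct_conv_sum_set atLeast0LessThan)
  finally have t1: "ctr Pc = of_nat (length (filter (\<lambda>a. a = 1) xs))" using prod_01(2)[OF xs01] by simp
  have "ctr Pc = (\<Sum>i<n. complex_of_real (P $$ (i,i)))" unfolding ctr_def Pc_def using P by simp
  also have "\<dots> = complex_of_real (mat_trace P)" unfolding mat_trace_def using P by simp
  finally have t2: "ctr Pc = of_nat d" using tr by simp
  have cd: "length (filter (\<lambda>a. a = 1) xs) = d" using t1 t2 by simp
  have cnd: "length (filter (\<lambda>a. a \<noteq> 1) xs) = n - d"
    using sum_length_filter_compl[of "\<lambda>a. a = 1" xs] lxs cd by simp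
  show "d \<le> n" using length_filter_le[of "\<lambda>a. a = 1" xs] lxs cd by simp
  have cPc: "char_poly Pc = [:-1,1:] ^ d * [:0,1:] ^ (n - d)"
    unfolding cpPc cpJ prod_01(1)[OF xs01] cd cnd ..
  interpret rh: map_poly_inj_comm_ring_hom "of_real :: real \<Rightarrow> complex" ..
  have "map_poly of_real (char_poly P) = char_poly Pc" unfolding Pc_def by (rule of_real_hom.char_poly_hom[OF P, symmetric])
  also have "\<dots> = map_poly (of_real :: real \<Rightarrow> complex) ([:-1,1:] ^ d * [:0,1:] ^ (n - d))"
    unfolding cPc rh.hom_mult rh.hom_power by simp
  finally show "char_poly P = [:-1,1:] ^ d * [:0,1:] ^ (n - d)" using rh.injectivity by blast
qed

lemma one_smult_mat': "(1::'a::monoid_mult) \<cdot>\<^sub>m A = A"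
  by (rule eq_matI) auto

lemma vec_eq_iff': "x \<in> carrier_vec n \<Longrightarrow> y \<in> carrier_vec n \<Longrightarrow> (x = y) \<longleftrightarrow> (\<forall>i<n. x $ i = y $ i)"
  by (auto intro: eq_vecI)

lemma char_matrix_dims[simp]: "dim_row (char_matrix A e) = dim_row A" "dim_col (char_matrix A e) = dim_row A"
  unfolding char_matrix_def by simp_all

lemma char1_entry:
  fixes P :: "real mat"
  assumes P: "P \<in> carrier_mat n n" and i: "i < n" and j: "j < n"
  shows "char_matrix P 1 $$ (i,j) = P $$ (i,j) - (if i = j then 1 else 0)"
  unfolding char_matrix_def using P i j by auto

lemma char1_carrier: "P \<in> carrier_mat n n \<Longrightarrow> char_matrix P 1 \<in> carrier_mat n n"
  by simp

lemma char1_mult_vec: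
  fixes P :: "real mat"
  assumes P: "P \<in> carrier_mat n n" and v: "v \<in> carrier_vec n" and i: "i < n"
  shows "(char_matrix P 1 *\<^sub>v v) $ i = (P *\<^sub>v v) $ i - v $ i"
proof -
  have N: "char_matrix P 1 \<in> carrier_mat n n" using P by simp
  have "(char_matrix P 1 *\<^sub>v v) $ i = (\<Sum>k\<in>{0..<n}. char_matrix P 1 $$ (i,k) * v $ k)"
    using carrier_matD[OF N] v i by (simp add: scalar_prod_def)
  also have "\<dots> = (\<Sum>k\<in>{0..<n}. P $$ (i,k) * v $ k - (if i = k then v $ k else 0))"
    using P i by (intro sum.cong) (auto simp: char1_entry algebra_simps)
  also have "\<dots> = (\<Sum>k\<in>{0..<n}. P $$ (i,k) * v $ k) - v $ i"
    using i by (simp add: sum_subtractf)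
  also have "(\<Sum>k\<in>{0..<n}. P $$ (i,k) * v $ k) = (P *\<^sub>v v) $ i"
    using P v i by (simp add: scalar_prod_def)
  finally show ?thesis .
qed

lemma kernel_char1:
  fixes P :: "real mat"
  assumes P: "P \<in> carrier_mat n n"
  shows "mat_kernel (char_matrix P 1) = {v \<in> carrier_vec n. P *\<^sub>v v = v}"
proof -
  have "char_matrix P 1 *\<^sub>v v = 0\<^sub>v n \<longleftrightarrow> P *\<^sub>v v = v" if v: "v \<in> carrier_vec n" for v
  proof -
    have N: "char_matrix P 1 \<in> carrier_mat n n" using P by simp
    have "char_matrix P 1 *\<^sub>v v = 0\<^sub>v n \<longleftrightarrow> (\<forall>i<n. (char_matrix P 1 *\<^sub>v v) $ i = 0\<^sub>v n $ i)"
      by (rule vec_eq_iff') (use mult_mat_vec_carrier[OF N v] in auto)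
    also have "\<dots> \<longleftrightarrow> (\<forall>i<n. (P *\<^sub>v v) $ i = v $ i)"
      using char1_mult_vec[OF P v] by auto
    also have "\<dots> \<longleftrightarrow> P *\<^sub>v v = v"
      by (rule vec_eq_iff'[symmetric]) (use mult_mat_vec_carrier[OF P v] v in auto)
    finally show ?thesis .
  qed
  then show ?thesis unfolding mat_kernel_def using carrier_matD[OF char1_carrier[OF P]] by auto
qed

lemma smult_mult_vec:
  fixes A :: "real mat"
  assumes A: "A \<in> carrier_mat n n" and v: "v \<in> carrier_vec n"
  shows "(c \<cdot>\<^sub>m A) *\<^sub>v v = c \<cdot>\<^sub>v (A *\<^sub>v v)"
proof (rule eq_vecI)
  fix i assume "i < dim_vec (c \<cdot>\<^sub>v (A *\<^sub>v v))"
  then have i: "i < n" using A by simp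
  show "((c \<cdot>\<^sub>m A) *\<^sub>v v) $ i = (c \<cdot>\<^sub>v (A *\<^sub>v v)) $ i"
    using A v i by (simp add: scalar_prod_def sum_distrib_left mult.assoc)
qed (use A in simp)

lemma kernel_smult:
  fixes A :: "real mat"
  assumes A: "A \<in> carrier_mat n n" and c: "c \<noteq> 0"
  shows "mat_kernel (c \<cdot>\<^sub>m A) = mat_kernel A"
proof -
  have "(c \<cdot>\<^sub>m A) *\<^sub>v v = 0\<^sub>v n \<longleftrightarrow> A *\<^sub>v v = 0\<^sub>v n" if v: "v \<in> carrier_vec n" for v
  proof -
    have "(c \<cdot>\<^sub>m A) *\<^sub>v v = 0\<^sub>v n \<longleftrightarrow> (\<forall>i<n. ((c \<cdot>\<^sub>m A) *\<^sub>v v) $ i = 0\<^sub>v n $ i)"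
      by (rule vec_eq_iff') (use mult_mat_vec_carrier[OF smult_carrier_mat[OF A] v] in auto)
    also have "\<dots> \<longleftrightarrow> (\<forall>i<n. (A *\<^sub>v v) $ i = 0\<^sub>v n $ i)"
      using smult_mult_vec[OF A v, of c] A v c by auto
    also have "\<dots> \<longleftrightarrow> A *\<^sub>v v = 0\<^sub>v n"
      by (rule vec_eq_iff'[symmetric]) (use mult_mat_vec_carrier[OF A v] in auto)
    finally show ?thesis .
  qed
  then show ?thesis unfolding mat_kernel_def using carrier_matD[OF A] carrier_matD[OF smult_carrier_mat[OF A]] by auto
qed

lemma char1_sq:
  fixes P :: "real mat"
  assumes P: "P \<in> carrier_mat n n" and idem: "P * P = P"
  shows "char_matrix P 1 * char_matrix P 1 = (-1) \<cdot>\<^sub>m char_matrix P 1"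
proof (rule eq_matI)
  fix i j assume ij: "i < dim_row ((-1) \<cdot>\<^sub>m char_matrix P 1)" "j < dim_col ((-1) \<cdot>\<^sub>m char_matrix P 1)"
  then have i: "i < n" and j: "j < n" using P by auto
  let ?N = "char_matrix P 1"
  have N: "?N \<in> carrier_mat n n" using P by simp
  have "(?N * ?N) $$ (i,j) = (\<Sum>k\<in>{0..<n}. ?N $$ (i,k) * ?N $$ (k,j))"
    using carrier_matD[OF N] i j by (simp add: scalar_prod_def)
  also have "\<dots> = (\<Sum>k\<in>{0..<n}. P $$ (i,k) * P $$ (k,j)
       - ((if i = k then P $$ (k,j) else 0) + (if k = j then P $$ (i,k) else 0))
       + (if k = i \<and> k = j then 1 else 0))"
    using P i j by (intro sum.cong) (auto simp: char1_entry algebra_simps)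
  also have "\<dots> = (\<Sum>k\<in>{0..<n}. P $$ (i,k) * P $$ (k,j)) - (P $$ (i,j) + P $$ (i,j))
       + (if i = j then 1 else 0)"
  proof -
    have e: "(\<Sum>k\<in>{0..<n}. (if k = i \<and> k = j then 1 else 0::real)) = (if i = j then 1 else 0)"
      using i j by (cases "i = j") (auto intro: sum.neutral)
    show ?thesis using i j by (simp add: sum.distrib sum_subtractf e)
  qed
  also have "(\<Sum>k\<in>{0..<n}. P $$ (i,k) * P $$ (k,j)) = (P * P) $$ (i,j)"
    using P i j by (simp add: scalar_prod_def)
  also have "(P * P) $$ (i,j) = P $$ (i,j)" using idem by simp
  finally show "(?N * ?N) $$ (i,j) = ((-1) \<cdot>\<^sub>m ?N) $$ (i,j)"
    using P i j by (simp add: char1_entry)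
qed (use P in auto)

lemma char1_pow:
  fixes P :: "real mat"
  assumes P: "P \<in> carrier_mat n n" and idem: "P * P = P"
  shows "char_matrix P 1 ^\<^sub>m (Suc k) = (-1) ^ k \<cdot>\<^sub>m char_matrix P 1"
proof (induction k)
  case 0
  then show ?case using P by (simp add: one_smult_mat')
next
  case (Suc k)
  let ?N = "char_matrix P 1"
  have N: "?N \<in> carrier_mat n n" using P by simp
  have "?N ^\<^sub>m Suc (Suc k) = ((-1) ^ k \<cdot>\<^sub>m ?N) * ?N" using Suc by simp
  also have "\<dots> = (-1) ^ k \<cdot>\<^sub>m (?N * ?N)" by (rule mult_smult_assoc_mat[OF N N])
  also have "\<dots> = (-1) ^ Suc k \<cdot>\<^sub>m ?N" unfolding char1_sq[OF P idem]
    by (rule eq_matI) auto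
  finally show ?case .
qed

lemma prod_blocks_nz: "(\<Prod>(s,a)\<leftarrow>L. [:-a,1:] ^ s) \<noteq> (0 :: real poly)"
  by (induction L) auto

lemma order_prod_blocks:
  "order (1::real) (\<Prod>(s,a)\<leftarrow>L. [:-a,1:] ^ s) = sum_list (map fst (filter (\<lambda>(s,e). e = 1) L))"
proof (induction L)
  case Nil
  then show ?case by simp
next
  case (Cons sa L)
  obtain s a where sa: "sa = (s,a)" by (cases sa)
  have nz: "[:-a,1:] ^ s * (\<Prod>(s,a)\<leftarrow>L. [:-a,1:] ^ s) \<noteq> (0 :: real poly)"
    using prod_blocks_nz[of L] by simp
  have o1: "order (1::real) ([:-a,1:] ^ s) = (if a = 1 then s else 0)"
  proof (cases "a = 1")
    case True then show ?thesis using order_power_n_n[of 1 s] by simp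
  next
    case False
    then have "poly ([:-a,1:] ^ s) 1 \<noteq> 0" by simp
    then show ?thesis using False order_0I[of "[:-a,1:] ^ s" 1] by simp
  qed
  show ?case unfolding sa using order_mult[OF nz, of 1] o1 Cons.IH by simp
qed

lemma idem_spectral:
  fixes P :: "real mat"
  assumes P: "P \<in> carrier_mat n n" and idem: "P * P = P" and tr: "mat_trace P = real d"
    and n0: "n > 0"
  shows "eig_mult 1 P = d" "eig_mult 0 P = n - d" "vec_space.rank n P = d"
proof -
  note cp = idem_charpoly(1)[OF P idem tr]
  note dn = idem_charpoly(2)[OF P idem tr]
  have nz: "[:-1,1:] ^ d * [:0,1:] ^ (n - d) \<noteq> (0 :: real poly)" by simp
  have p1: "poly ([:0,1:] ^ (n - d)) (1::real) \<noteq> 0" by simp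
  have p0: "poly ([:-1,1:] ^ d) (0::real) \<noteq> 0" by simp
  show e1: "eig_mult 1 P = d"
    unfolding eig_mult_def cp order_mult[OF nz] using order_power_n_n[of 1 d] order_0I[OF p1] by simp
  show "eig_mult 0 P = n - d"
    unfolding eig_mult_def cp order_mult[OF nz] using order_power_n_n[of 0 "n - d"] order_0I[OF p0] by simp
  define as where "as = replicate d (1::real) @ replicate (n - d) 0"
  have cpas: "char_poly P = (\<Prod>a\<leftarrow>as. [:-a,1:])"
    unfolding cp as_def by (simp add: prod_list_replicate)
  obtain n_as where jnf: "jordan_nf P n_as" using jordan_nf_exists[OF P cpas] by blast
  have sim: "similar_mat P (jordan_matrix n_as)" using jnf unfolding jordan_nf_def by simp
  have "jordan_matrix n_as \<in> carrier_mat n n"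
    using similar_matD[OF sim] P by auto
  then have sumn: "sum_list (map fst n_as) = n" using carrier_matD(1) by fastforce
  let ?bl = "map fst (filter (\<lambda>(s,e). e = 1) n_as)"
  have le: "x \<le> n" if "x \<in> set ?bl" for x
  proof -
    have "x \<in> set (map fst n_as)" using that by auto
    then show ?thesis using member_le_sum_list[of x "map fst n_as"] sumn by simp
  qed
  have "dim_gen_eigenspace P 1 n = dim_gen_eigenspace (jordan_matrix n_as) 1 n"
    using dim_gen_eigenspace_similar[OF sim] by simp
  also have "\<dots> = sum_list (map (min n) ?bl)" by (rule dim_gen_eigenspace_jordan_matrix)
  also have "map (min n) ?bl = ?bl" by (rule map_idI) (use le in auto)
  also have "sum_list ?bl = order 1 (char_poly P)"
    unfolding jordan_nf_char_poly[OF jnf] order_prod_blocks ..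
  also have "\<dots> = d" using e1 unfolding eig_mult_def .
  finally have dge: "dim_gen_eigenspace P 1 n = d" .
  let ?N = "char_matrix P 1"
  have N: "?N \<in> carrier_mat n n" using P by simp
  obtain k where nk: "n = Suc k" using n0 by (cases n) auto
  have "kernel_dim (?N ^\<^sub>m n) = kernel_dim ((-1) ^ k \<cdot>\<^sub>m ?N)" unfolding nk char1_pow[OF P idem] ..
  also have "\<dots> = kernel_dim ?N"
  proof -
    have c: "(-1::real) ^ k \<noteq> 0" by simp
    show ?thesis unfolding kernel_dim_def using kernel_smult[OF N c] by simp
  qed
  finally have kd: "kernel_dim ?N = d" using dge unfolding dim_gen_eigenspace_def by simp
  have span: "LinearCombinations.module.span class_ring (module_vec TYPE(real) n) (set (cols P)) = mat_kernel ?N"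
  proof -
    have "LinearCombinations.module.span class_ring (module_vec TYPE(real) n) (set (cols P))
        = vec_space.col_space n P" unfolding vec_space.col_space_def ..
    also have "\<dots> = {y \<in> carrier_vec n. \<exists>x\<in>carrier_vec n. P *\<^sub>v x = y}"
      using vec_space.col_space_eq[OF P] P by simp
    also have "\<dots> = {v \<in> carrier_vec n. P *\<^sub>v v = v}"
    proof (rule equalityI; rule subsetI)
      fix y assume "y \<in> {y \<in> carrier_vec n. \<exists>x\<in>carrier_vec n. P *\<^sub>v x = y}"
      then obtain x where y: "y \<in> carrier_vec n" and x: "x \<in> carrier_vec n" and yx: "P *\<^sub>v x = y" by blast
      have "P *\<^sub>v y = (P * P) *\<^sub>v x" unfolding yx[symmetric] using assoc_mult_mat_vec[OF P P x] by simp
      then show "y \<in> {v \<in> carrier_vec n. P *\<^sub>v v = v}" using idem yx y by simp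
    next
      fix y assume "y \<in> {v \<in> carrier_vec n. P *\<^sub>v v = v}"
      then show "y \<in> {y \<in> carrier_vec n. \<exists>x\<in>carrier_vec n. P *\<^sub>v x = y}" by blast
    qed
    also have "\<dots> = mat_kernel ?N" using kernel_char1[OF P] by simp
    finally show ?thesis .
  qed
  have "vec_space.rank n P = kernel_dim ?N"
    unfolding vec_space.rank_def kernel_dim_def span using carrier_matD[OF N] by simp
  then show "vec_space.rank n P = d" using kd by simp
qed

lemma mat_add_cancel:
  fixes A :: "real mat"
  assumes "A \<in> carrier_mat n m" "B \<in> carrier_mat n m" "X \<in> carrier_mat n m" "A + X = B + X"
  shows "A = B"
proof (rule eq_matI)
  fix i j assume ij: "i < dim_row B" "j < dim_col B"
  have "(A + X) $$ (i,j) = (B + X) $$ (i,j)" using assms(4) by simp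
  then show "A $$ (i,j) = B $$ (i,j)" using assms(1-3) ij by simp
qed (use assms in auto)

lemma smult_smult_mat: "a \<cdot>\<^sub>m (b \<cdot>\<^sub>m A) = (a * b :: 'a :: semigroup_mult) \<cdot>\<^sub>m A"
  by (rule eq_matI) (auto simp: mult.assoc)



lemma smult_one_mat_mult: assumes "A \<in> carrier_mat n n"
  shows "A * (c \<cdot>\<^sub>m 1\<^sub>m n) = c \<cdot>\<^sub>m (A :: 'a :: comm_ring_1 mat)"
    "(c \<cdot>\<^sub>m 1\<^sub>m n) * A = c \<cdot>\<^sub>m A"
  using assms mult_smult_distrib[of A n n "1\<^sub>m n" n c] mult_smult_assoc_mat[of "1\<^sub>m n" n n A n c]
  by auto

lemma forest_dim_le: "forest_dim n W \<le> n"
proof -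
  define S where "S = {card (weak_comps {..<n} F) | F. in_forest n W F}"
  have S: "S = (\<lambda>F. card (weak_comps {..<n} F)) ` {F. forest n W F}"
    unfolding S_def in_forest_iff by blast
  have finS: "finite S" unfolding S using forests_finite by simp
  have "card (weak_comps {..<n} {}) = n" using card_forest_comps[OF forest_empty[of n W]] by simp
  then have "n \<in> S" unfolding S using forest_empty by force
  then have "Min S \<le> n" using Min_le[OF finS] by blast
  then show ?thesis unfolding forest_dim_def S_def by simp
qed

lemma smult_mult_both:
  assumes "A \<in> carrier_mat n n" "B \<in> carrier_mat n n"
  shows "(a \<cdot>\<^sub>m A) * (b \<cdot>\<^sub>m B) = (a * b :: real) \<cdot>\<^sub>m (A * B)"
    "A * (b \<cdot>\<^sub>m B) = b \<cdot>\<^sub>m (A * B)" "(a \<cdot>\<^sub>m A) * B = a \<cdot>\<^sub>m (A * B)"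
proof -
  show 1: "A * (b \<cdot>\<^sub>m B) = b \<cdot>\<^sub>m (A * B)" by (rule mult_smult_distrib[of _ n n _ n]) (use assms in auto)
  show 2: "(a \<cdot>\<^sub>m A) * B = a \<cdot>\<^sub>m (A * B)" by (rule mult_smult_assoc_mat[of _ n n _ n]) (use assms in auto)
  have "(a \<cdot>\<^sub>m A) * (b \<cdot>\<^sub>m B) = a \<cdot>\<^sub>m (A * (b \<cdot>\<^sub>m B))"
    by (rule mult_smult_assoc_mat[of _ n n _ n]) (use assms in auto)
  then show "(a \<cdot>\<^sub>m A) * (b \<cdot>\<^sub>m B) = (a * b :: real) \<cdot>\<^sub>m (A * B)" unfolding 1 smult_smult_mat .
qed

context
  fixes n :: nat and W :: "real mat"
  assumes diag: "\<forall>i<n. W $$ (i,i) = 0" and nn: "\<forall>i<n. \<forall>j<n. W $$ (i,j) \<ge> 0"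
begin

abbreviation (input) "L \<equiv> laplacian n W"
abbreviation (input) "Q \<equiv> Qmat n W"
abbreviation (input) "m \<equiv> n - forest_dim n W"

lemma rec: "Q (Suc k) + L * Q k = sigma n W (Suc k) \<cdot>\<^sub>m 1\<^sub>m n"
  using recurrence[OF diag nn] .

lemma LQ_comm: "L * Q k = Q k * L"
proof (induction k)
  case 0
  then show ?case unfolding Q0 using L_carrier[of n W] by simp
next
  case (Suc k)
  have cL: "L \<in> carrier_mat n n" and cQ: "\<And>k. Q k \<in> carrier_mat n n" using L_carrier Q_carrier by auto
  have e1: "L * (Q (Suc k) + L * Q k) = L * Q (Suc k) + L * (L * Q k)"
    by (rule mult_add_distrib_mat[of _ n n]) (use cL cQ in auto)
  have e2: "(Q (Suc k) + L * Q k) * L = Q (Suc k) * L + (L * Q k) * L"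
    by (rule add_mult_distrib_mat[of _ n n]) (use cL cQ in auto)
  have e3: "L * (Q (Suc k) + L * Q k) = (Q (Suc k) + L * Q k) * L"
    unfolding rec using smult_one_mat_mult[OF cL] by simp
  have "(L * Q k) * L = L * (Q k * L)" by (rule assoc_mult_mat[of _ n n _ n _ n]) (use cL cQ in auto)
  then have e4: "(L * Q k) * L = L * (L * Q k)" using Suc.IH by simp
  have "L * Q (Suc k) + L * (L * Q k) = Q (Suc k) * L + L * (L * Q k)"
    using e1 e2 e3 e4 by simp
  moreover have "L * Q (Suc k) \<in> carrier_mat n n" "Q (Suc k) * L \<in> carrier_mat n n"
    "L * (L * Q k) \<in> carrier_mat n n" using cL cQ by auto
  ultimately show ?case using mat_add_cancel by blast
qed

lemma LQm: "L * Q m = 0\<^sub>m n n"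
proof -
  have "Q (Suc m) + L * Q m = sigma n W (Suc m) \<cdot>\<^sub>m 1\<^sub>m n" by (rule rec)
  then have "0\<^sub>m n n + L * Q m = 0 \<cdot>\<^sub>m 1\<^sub>m n" using Q_big[of n W "Suc m"] sigma_big[of n W "Suc m"] by simp
  moreover have "(0::real) \<cdot>\<^sub>m 1\<^sub>m n = 0\<^sub>m n n" by (rule eq_matI) auto
  ultimately show ?thesis using L_carrier[of n W] Q_carrier[of n W m] by simp
qed

lemma QmL: "Q m * L = 0\<^sub>m n n"
  using LQm LQ_comm by simp

lemma QmQk: "Q m * Q k = sigma n W k \<cdot>\<^sub>m Q m"
proof (induction k)
  case 0
  then show ?case unfolding Q0 sigma0 using Q_carrier[of n W m] by (simp add: one_smult_mat')
next
  case (Suc k)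
  have cL: "L \<in> carrier_mat n n" and cQ: "\<And>k. Q k \<in> carrier_mat n n" using L_carrier Q_carrier by auto
  have "Q m * (Q (Suc k) + L * Q k) = Q m * Q (Suc k) + Q m * (L * Q k)"
    by (rule mult_add_distrib_mat[of _ n n]) (use cL cQ in auto)
  moreover have "Q m * (L * Q k) = 0\<^sub>m n n"
    using cL cQ QmL by (simp add: assoc_mult_mat[symmetric, of _ n n _ n _ n])
  moreover have "Q m * (Q (Suc k) + L * Q k) = sigma n W (Suc k) \<cdot>\<^sub>m Q m"
    unfolding rec using smult_one_mat_mult[OF cQ] by simp
  moreover have "Q m * Q (Suc k) \<in> carrier_mat n n" using mult_carrier_mat[OF cQ cQ] .
  ultimately show ?case by simp
qed

lemma QkQm: "Q k * Q m = sigma n W k \<cdot>\<^sub>m Q m"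
proof (induction k)
  case 0
  then show ?case unfolding Q0 sigma0 using Q_carrier[of n W m] by (simp add: one_smult_mat')
next
  case (Suc k)
  have cL: "L \<in> carrier_mat n n" and cQ: "\<And>k. Q k \<in> carrier_mat n n" using L_carrier Q_carrier by auto
  have "(Q (Suc k) + L * Q k) * Q m = Q (Suc k) * Q m + (L * Q k) * Q m"
    by (rule add_mult_distrib_mat[of _ n n]) (use cL cQ in auto)
  moreover have "(L * Q k) * Q m = 0\<^sub>m n n"
  proof -
    have "(L * Q k) * Q m = L * (Q k * Q m)" by (rule assoc_mult_mat[of _ n n _ n _ n]) (use cL cQ in auto)
    also have "\<dots> = sigma n W k \<cdot>\<^sub>m (L * Q m)" unfolding Suc.IH by (rule mult_smult_distrib[of _ n n _ n]) (use cL cQ in auto)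
    finally show ?thesis unfolding LQm by simp
  qed
  moreover have "(Q (Suc k) + L * Q k) * Q m = sigma n W (Suc k) \<cdot>\<^sub>m Q m"
    unfolding rec using smult_one_mat_mult[OF cQ] by simp
  moreover have "Q (Suc k) * Q m \<in> carrier_mat n n" using mult_carrier_mat[OF cQ cQ] .
  ultimately show ?case by simp
qed

abbreviation (input) "J \<equiv> Jmat n W"

lemma JJk: assumes k: "k \<le> m"
  shows "J m * J k = J m" "J k * J m = J m"
proof -
  have cQ: "\<And>k. Q k \<in> carrier_mat n n" using Q_carrier by auto
  have sk: "sigma n W k \<noteq> 0" using sigma_pos[OF k] by simp
  have "J m * J k = (1 / sigma n W m * (1 / sigma n W k)) \<cdot>\<^sub>m (Q m * Q k)"
    unfolding Jmat_def using smult_mult_both(1)[OF cQ cQ] by simp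
  also have "\<dots> = J m" unfolding QmQk smult_smult_mat Jmat_def using sk by simp
  finally show "J m * J k = J m" .
  have "J k * J m = (1 / sigma n W k * (1 / sigma n W m)) \<cdot>\<^sub>m (Q k * Q m)"
    unfolding Jmat_def using smult_mult_both(1)[OF cQ cQ] by simp
  also have "\<dots> = J m" unfolding QkQm smult_smult_mat Jmat_def using sk by simp
  finally show "J k * J m = J m" .
qed

lemma LJ: "L * J m = 0\<^sub>m n n" "J m * L = 0\<^sub>m n n"
  unfolding Jmat_def using smult_mult_both(2,3)[OF L_carrier[of n W] Q_carrier[of n W m]]
     smult_mult_both(2,3)[OF Q_carrier[of n W m] L_carrier[of n W]]
  by (simp_all add: LQm QmL)

lemma trace_J: "mat_trace (J m) = real (forest_dim n W)"
proof -
  have sm: "sigma n W m \<noteq> 0" using sigma_pos[of m n W] by simp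
  have d: "forest_dim n W \<le> n" by (rule forest_dim_le)
  have roots: "(\<Sum>i<n. ind (rootof F i = i)) = real (forest_dim n W)" if F: "F \<in> FS n W m" for F
  proof -
    have f: "forest n W F" and cF: "card F = m" using F unfolding FS_def by auto
    have "(\<Sum>i<n. ind (rootof F i = i)) = (\<Sum>i\<in>{..<n}. if i \<in> roots n F then 1 else 0)"
    proof (rule sum.cong[OF refl])
      fix i assume "i \<in> {..<n}"
      then have i: "i < n" by simp
      have "rootof F i = i \<longleftrightarrow> i \<notin> Domain F"
        using rootof_root[OF forest_sv[OF f]] rootof_props(2)[OF f i] by metis
      then show "ind (rootof F i = i) = (if i \<in> roots n F then 1 else 0)"
        unfolding ind_def roots_def using i by simp
    qed
    also have "\<dots> = real (card (roots n F))"
    proof -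
      have e: "{..<n} \<inter> roots n F = roots n F" unfolding roots_def by auto
      show ?thesis by (simp add: sum.If_cases e)
    qed
    also have "card (roots n F) = forest_dim n W" using card_forest[OF f] cF d by simp
    finally show ?thesis .
  qed
  have "mat_trace (J m) = (\<Sum>i<n. J m $$ (i,i))" unfolding mat_trace_def using J_carrier[of n W m] by simp
  also have "\<dots> = (\<Sum>i<n. (1 / sigma n W m) * Q m $$ (i,i))"
    unfolding Jmat_def by (rule sum.cong) auto
  also have "\<dots> = (1 / sigma n W m) * (\<Sum>i<n. \<Sum>F\<in>FS n W m. weight W F * ind (rootof F i = i))"
    by (simp add: sum_distrib_left Q_entry)
  also have "(\<Sum>i<n. \<Sum>F\<in>FS n W m. weight W F * ind (rootof F i = i))
      = (\<Sum>F\<in>FS n W m. weight W F * (\<Sum>i<n. ind (rootof F i = i)))"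
    by (subst sum.swap) (simp add: sum_distrib_left)
  also have "\<dots> = (\<Sum>F\<in>FS n W m. weight W F) * real (forest_dim n W)"
    using roots by (simp add: sum_distrib_right)
  also have "\<dots> = sigma n W m * real (forest_dim n W)" unfolding sigma_eq ..
  finally show ?thesis using sm by simp
qed

end


theorem proposition9:
  fixes n :: nat and W :: "real mat"
  assumes "n > 1" and "W \<in> carrier_mat n n"
    and "\<forall>i<n. W $$ (i,i) = 0"
    and "\<forall>i<n. \<forall>j<n. W $$ (i,j) \<ge> 0"
  shows "(laplacian n W * Jmat n W (n - forest_dim n W) = 0\<^sub>m n n
       \<and> Jmat n W (n - forest_dim n W) * laplacian n W = 0\<^sub>m n n
       \<and> laplacian n W * Qmat n W (n - forest_dim n W) = 0\<^sub>m n n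
       \<and> Qmat n W (n - forest_dim n W) * laplacian n W = 0\<^sub>m n n)
    \<and> (\<forall>k\<le>n - forest_dim n W.
           Jmat n W (n - forest_dim n W) * Jmat n W k = Jmat n W (n - forest_dim n W)
         \<and> Jmat n W k * Jmat n W (n - forest_dim n W) = Jmat n W (n - forest_dim n W))
    \<and> (Jmat n W (n - forest_dim n W) * Jmat n W (n - forest_dim n W) = Jmat n W (n - forest_dim n W))
    \<and> (vec_space.rank n (Jmat n W (n - forest_dim n W)) = forest_dim n W
       \<and> eig_mult 1 (Jmat n W (n - forest_dim n W)) = forest_dim n W
       \<and> mat_trace (Jmat n W (n - forest_dim n W)) = real (forest_dim n W)
       \<and> eig_mult 0 (Jmat n W (n - forest_dim n W)) = n - forest_dim n W)"
  proof -
  have diag: "\<forall>i<n. W $$ (i,i) = 0" and nn: "\<forall>i<n. \<forall>j<n. W $$ (i,j) \<ge> 0" using assms by auto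
  have idem: "Jmat n W (n - forest_dim n W) * Jmat n W (n - forest_dim n W) = Jmat n W (n - forest_dim n W)"
    using JJk(1)[OF diag nn, of "n - forest_dim n W"] by simp
  note sp = idem_spectral[OF J_carrier idem trace_J[OF diag nn]]
  show ?thesis
    using LJ[OF diag nn] LQm[OF diag nn] QmL[OF diag nn] JJk[OF diag nn] idem
      sp trace_J[OF diag nn] assms(1) by auto
qed

end
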